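(* Let $n\ge1$, $\beta\in\mathbb C\setminus\{0\}$, $1\le m\le n$ and $a_1,\dots,a_m,b_1,\dots,b_m,k,l\in\{1,\dots,n\}$. In $OY_\beta(\mathfrak{gl}_n)$, $$\left(u+\frac\beta u-v-\frac\beta v\right)[\tilde T_{kl}(u),\tilde t^{a_1\dots a_m}_{b_1\dots b_m}(v)]=\sum_{i=1}^m\tilde T_{a_il}(u)\,\tilde t^{a_1\dots k\dots a_m}_{b_1\dots b_m}(v)-\sum_{i=1}^m\tilde t^{a_1\dots a_m}_{b_1\dots l\dots b_m}(v)\,\tilde T_{kb_i}(u),$$ where in $\tilde t^{a_1\dots k\dots a_m}_{b_1\dots b_m}$ the index $a_i$ is replaced by $k$, and in $\tilde t^{a_1\dots a_m}_{b_1\dots l\dots b_m}$ the index $b_i$ is replaced by $l$.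
   Context: $OY_\beta(\mathfrak{gl}_n)$ is the unital associative $\mathbb C$-algebra with generators $\tilde t^{(r)}_{ij}$ ($r\ge1$) and relations $\left(u+\frac\beta u-v-\frac\beta v\right)[\tilde T_{ij}(u),\tilde T_{kl}(v)]=\tilde T_{kj}(u)\tilde T_{il}(v)-\tilde T_{kj}(v)\tilde T_{il}(u)$, $\tilde T_{ij}(u)=\delta_{ij}+\sum_{r\ge1}\tilde t^{(r)}_{ij}u^{-r}$. For $c\in\mathbb C$, $\phi_c(u)$ is the unique series in $u+\mathbb C[[u^{-1}]]$ with $\phi_c(u)+\beta/\phi_c(u)=u+\beta/u+c$, and $\tilde T_{ij}(\phi(u)):=\sum_r\tilde t^{(r)}_{ij}\phi(u)^{-r}$ expanded in $u^{-1}$. $\tilde T_p(v)=\sum_{i,j}1^{\otimes(p-1)}\otimes E_{ij}\otimes1^{\otimes(m-p)}\otimes\tilde T_{ij}(v)$, and $A_m$ is the antisymmetrizer on $(\mathbb C^n)^{\otimes m}$, $A_m(e_{i_1}\otimes\cdots\otimes e_{i_m})=\sum_{p\in S_m}\mathrm{sgn}(p)e_{i_{p(1)}}\otimes\cdots\otimes e_{i_{p(m)}}$. The quantum minors $\tilde t^{a_1\dots a_m}_{b_1\dots b_m}(u)$ are defined by $A_m\tilde T_1(u)\tilde T_2(\phi_{-1}(u))\cdots\tilde T_m(\phi_{-(m-1)}(u))=\sum_{a_i,b_j}E_{a_1b_1}\otimes\cdots\otimes E_{a_mb_m}\otimes\tilde t^{a_1\dots a_m}_{b_1\dots b_m}(u)$.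 *)

theory Defs
  imports "HOL-Computational_Algebra.Formal_Power_Series" "HOL-Combinatorics.Permutations"
begin

text \<open>A complex algebra is modelled as a ring 'a together with a unital ring
homomorphism sc from the complex numbers into the centre of 'a.\<close>

definition complex_alg :: "(complex \<Rightarrow> 'a::ring_1) \<Rightarrow> bool" where
  "complex_alg sc \<longleftrightarrow> sc 1 = 1 \<and> (\<forall>x y. sc (x + y) = sc x + sc y)
     \<and> (\<forall>x y. sc (x * y) = sc x * sc y) \<and> (\<forall>x a. sc x * a = a * sc x)"

text \<open>Coefficients of T_ij(u) in powers of u^{-1}; coefficient 0 is delta_ij.
  t r i j stands for the generator t^(r)_ij (only r >= 1 used).\<close>

definition Tc :: "(nat \<Rightarrow> nat \<Rightarrow> nat \<Rightarrow> 'a::ring_1) \<Rightarrow> nat \<Rightarrow> nat \<Rightarrow> nat \<Rightarrow> 'a" where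
  "Tc t r i j = (if r = 0 then (if i = j then 1 else 0) else t r i j)"

definition zext :: "(nat \<Rightarrow> nat \<Rightarrow> 'a::zero) \<Rightarrow> int \<Rightarrow> int \<Rightarrow> 'a" where
  "zext D r s = (if r < 0 \<or> s < 0 then 0 else D (nat r) (nat s))"

text \<open>Coefficient of u^{-r} v^{-s} in (u + beta/u - v - beta/v) X(u,v), where
  X has coefficients D (in powers u^{-1}, v^{-1}).\<close>
definition factor_coeff :: "(complex \<Rightarrow> 'a::ring_1) \<Rightarrow> complex \<Rightarrow> (nat \<Rightarrow> nat \<Rightarrow> 'a) \<Rightarrow> int \<Rightarrow> int \<Rightarrow> 'a" where
  "factor_coeff sc \<beta> D r s =
     zext D (r + 1) s + sc \<beta> * zext D (r - 1) s - zext D r (s + 1) - sc \<beta> * zext D r (s - 1)"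

definition commutator :: "'a::ring \<Rightarrow> 'a \<Rightarrow> 'a" where
  "commutator x y = x * y - y * x"

text \<open>Defining relations of OY_beta(gl_n), coefficientwise in u^{-1}, v^{-1}.\<close>
definition OY_rel :: "(complex \<Rightarrow> 'a::ring_1) \<Rightarrow> complex \<Rightarrow> nat \<Rightarrow> (nat \<Rightarrow> nat \<Rightarrow> nat \<Rightarrow> 'a) \<Rightarrow> bool" where
  "OY_rel sc \<beta> n t \<longleftrightarrow> (\<forall>i\<in>{1..n}. \<forall>j\<in>{1..n}. \<forall>k\<in>{1..n}. \<forall>l\<in>{1..n}. \<forall>r s :: int.
     factor_coeff sc \<beta> (\<lambda>p q. commutator (Tc t p i j) (Tc t q k l)) r s
     = zext (\<lambda>p q. Tc t p k j * Tc t q i l - Tc t q k j * Tc t p i l) r s)"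

text \<open>phi_c(u) = u + p(u^{-1}), p the unique power series with
  phi + beta/phi = u + beta/u + c (variable X stands for u^{-1}).\<close>
definition phi_tail :: "complex \<Rightarrow> complex \<Rightarrow> complex fps" where
  "phi_tail \<beta> c = (THE p. p + fps_const \<beta> * fps_X * inverse (1 + fps_X * p)
                         = fps_const \<beta> * fps_X + fps_const c)"

text \<open>phi_c(u)^{-1} as a power series in u^{-1}.\<close>
definition phi_inv :: "complex \<Rightarrow> complex \<Rightarrow> complex fps" where
  "phi_inv \<beta> c = fps_X * inverse (1 + fps_X * phi_tail \<beta> c)"

definition Tser :: "(nat \<Rightarrow> nat \<Rightarrow> nat \<Rightarrow> 'a::ring_1) \<Rightarrow> nat \<Rightarrow> nat \<Rightarrow> 'a fps" where
  "Tser t i j = Abs_fps (\<lambda>r. Tc t r i j)"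

text \<open>T_ij(phi_c(u)) = sum_r t^(r)_ij phi_c(u)^{-r}, expanded in u^{-1}
  (only r <= N contributes to the coefficient of u^{-N}).\<close>
definition Tphi :: "(complex \<Rightarrow> 'a::ring_1) \<Rightarrow> complex \<Rightarrow> (nat \<Rightarrow> nat \<Rightarrow> nat \<Rightarrow> 'a) \<Rightarrow> complex \<Rightarrow> nat \<Rightarrow> nat \<Rightarrow> 'a fps" where
  "Tphi sc \<beta> t c i j = Abs_fps (\<lambda>N. \<Sum>r\<le>N. Tc t r i j * sc (fps_nth (phi_inv \<beta> c ^ r) N))"

text \<open>Entry ((c_1..c_m),(a_1..a_m)) of the antisymmetrizer A_m:
  A_m(e_{a_1} x ... x e_{a_m}) = sum_p sgn p e_{a_{p(1)}} x ... x e_{a_{p(m)}}.\<close>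
definition antisym_entry :: "nat \<Rightarrow> (nat \<Rightarrow> nat) \<Rightarrow> (nat \<Rightarrow> nat) \<Rightarrow> int" where
  "antisym_entry m c a = (\<Sum>p\<in>{p. p permutes {1..m} \<and> (\<forall>i\<in>{1..m}. c i = a (p i))}. sign p)"

definition Tfac :: "(complex \<Rightarrow> 'a::ring_1) \<Rightarrow> complex \<Rightarrow> (nat \<Rightarrow> nat \<Rightarrow> nat \<Rightarrow> 'a) \<Rightarrow> nat \<Rightarrow> nat \<Rightarrow> nat \<Rightarrow> 'a fps" where
  "Tfac sc \<beta> t i a b = (if i = 1 then Tser t a b else Tphi sc \<beta> t (- of_nat (i - 1)) a b)"

definition qminor :: "(complex \<Rightarrow> 'a::ring_1) \<Rightarrow> complex \<Rightarrow> nat \<Rightarrow> (nat \<Rightarrow> nat \<Rightarrow> nat \<Rightarrow> 'a) \<Rightarrow> nat \<Rightarrow> (nat \<Rightarrow> nat) \<Rightarrow> (nat \<Rightarrow> nat) \<Rightarrow> 'a fps" where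
  "qminor sc \<beta> n t m c b =
     (\<Sum>a\<in>PiE {1..m} (\<lambda>_. {1..n}).
        fps_const (of_int (antisym_entry m c a)) * prod_list (map (\<lambda>i. Tfac sc \<beta> t i (a i) (b i)) [1..<m+1]))"

end

theory Submission
  imports Defs
begin

unbundle fps_syntax


definition cent :: "'r::ring_1 \<Rightarrow> bool" where
  "cent x \<longleftrightarrow> (\<forall>y. x * y = y * x)"

lemma cent_mult: "cent x \<Longrightarrow> x * y = y * x" by (simp add: cent_def)
lemma cent_add: "cent x \<Longrightarrow> cent y \<Longrightarrow> cent (x + y)"
  by (simp add: cent_def algebra_simps)
lemma cent_diff: "cent x \<Longrightarrow> cent y \<Longrightarrow> cent (x - y)"
  by (simp add: cent_def algebra_simps)
lemma cent_times: "cent x \<Longrightarrow> cent y \<Longrightarrow> cent (x * y)"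
  unfolding cent_def by (metis mult.assoc)
lemma cent_one: "cent 1" by (simp add: cent_def)
lemma cent_zero: "cent 0" by (simp add: cent_def)
lemma cent_uminus: "cent x \<Longrightarrow> cent (- x)" by (simp add: cent_def)
lemma cent_of_nat: "cent (of_nat n)" by (simp add: cent_def mult_of_nat_commute)
lemma cent_of_int: "cent (of_int n)" by (simp add: cent_def mult_of_int_commute)
lemma cent_mid: "cent c \<Longrightarrow> c * (P * X * S) = P * (c * X) * S"
proof -
  assume "cent c"
  then have "c * P = P * c" by (simp add: cent_def)
  have "c * (P * X * S) = (c * P) * X * S" by (simp only: mult.assoc)
  also have "\<dots> = P * (c * X) * S" using \<open>c * P = P * c\<close> by (simp only: mult.assoc)
  finally show ?thesis .
qed
lemma of_int_mid: "of_int z * (X * Y) = X * (of_int z * (Y::'r::ring_1))"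
  by (metis mult.assoc mult_of_int_commute)
lemma diff4: "(x1 - y1) - (x2 - y2) = (0::'r::ab_group_add) \<Longrightarrow> x1 - x2 = y1 - y2"
  by (simp add: algebra_simps)
lemma mid_comb: "cent c \<Longrightarrow> cent c' \<Longrightarrow> c * (P * X * S) - c' * (P * Y * S) = P * (c * X - c' * Y) * S"
  by (simp add: cent_mid right_diff_distrib left_diff_distrib)

abbreviation tau :: "nat \<Rightarrow> nat \<Rightarrow> nat \<Rightarrow> nat" where "tau i j \<equiv> Transposition.transpose i j"

definition prodR :: "(nat \<Rightarrow> nat \<Rightarrow> nat \<Rightarrow> 'r::ring_1) \<Rightarrow> nat \<Rightarrow> nat \<Rightarrow> (nat \<Rightarrow> nat) \<Rightarrow> (nat \<Rightarrow> nat) \<Rightarrow> 'r" where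
  "prodR F lo hi r d = prod_list (map (\<lambda>i. F i (r i) (d i)) [lo..<Suc hi])"

lemma prodR_empty: "hi < lo \<Longrightarrow> prodR F lo hi r d = 1"
  by (simp add: prodR_def)
lemma prodR_Cons: "lo \<le> hi \<Longrightarrow> prodR F lo hi r d = F lo (r lo) (d lo) * prodR F (Suc lo) hi r d"
  unfolding prodR_def by (simp del: upt_Suc add: upt_conv_Cons)
lemma prodR_snoc: "lo \<le> Suc hi \<Longrightarrow> prodR F lo (Suc hi) r d = prodR F lo hi r d * F (Suc hi) (r (Suc hi)) (d (Suc hi))"
  unfolding prodR_def using upt_Suc_append[of lo "Suc hi"] by (simp del: upt_Suc)
lemma prodR_cong: "(\<And>i. lo \<le> i \<Longrightarrow> i \<le> hi \<Longrightarrow> r i = r' i \<and> d i = d' i) \<Longrightarrow> prodR F lo hi r d = prodR F lo hi r' d'"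
  unfolding prodR_def by (intro arg_cong[where f=prod_list] map_cong) auto

definition minorP :: "(nat \<Rightarrow> nat \<Rightarrow> nat \<Rightarrow> 'r::ring_1) \<Rightarrow> nat \<Rightarrow> (nat \<Rightarrow> nat) \<Rightarrow> (nat \<Rightarrow> nat) \<Rightarrow> 'r" where
  "minorP F m r d = (\<Sum>\<sigma>\<in>{\<sigma>. \<sigma> permutes {1..m}}. of_int (sign \<sigma>) * prodR F 1 m (r \<circ> \<sigma>) d)"

definition ext0 :: "nat \<Rightarrow> (nat \<Rightarrow> nat) \<Rightarrow> nat \<Rightarrow> nat" where
  "ext0 k a = (\<lambda>i. if i = 0 then k else a i)"

lemma perm0: fixes m :: nat assumes "\<sigma> \<in> {\<sigma>. \<sigma> permutes {1..m}}" shows "\<sigma> 0 = 0"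
proof -
  have "\<sigma> permutes {1..m}" using assms by simp
  moreover have "(0::nat) \<notin> {1..m}" by simp
  ultimately show ?thesis by (rule permutes_not_in)
qed
lemma perm_in: fixes m :: nat assumes "\<sigma> \<in> {\<sigma>. \<sigma> permutes {1..m}}" "i \<in> {1..m}" shows "\<sigma> i \<in> {1..m}"
proof -
  have "\<sigma> permutes {1..m}" using assms by simp
  then show ?thesis using permutes_in_image[of \<sigma> "{1..m}" i] assms(2) by blast
qed

lemma minorP_cong: assumes h: "\<And>i. 1 \<le> i \<Longrightarrow> i \<le> m \<Longrightarrow> r i = r' i \<and> d i = d' i"
  shows "minorP F m r d = minorP F m r' d'"
  unfolding minorP_def
proof (intro sum.cong refl arg_cong2[where f="(*)"] prodR_cong)
  fix \<sigma> i assume s: "\<sigma> \<in> {\<sigma>. \<sigma> permutes {1..m}}" and i: "1 \<le> i" "i \<le> m"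
  then have "\<sigma> i \<in> {1..m}" using perm_in[OF s, of i] by auto
  then show "(r \<circ> \<sigma>) i = (r' \<circ> \<sigma>) i \<and> d i = d' i" using h i by auto
qed

lemma sum_perm_swap:
  assumes "1 \<le> i" "i < i'" "i' \<le> m"
  shows "(\<Sum>\<sigma>\<in>{\<sigma>. \<sigma> permutes {1..m}}. of_int (sign \<sigma>) * G (\<sigma> \<circ> tau i i')) = - (\<Sum>\<sigma>\<in>{\<sigma>. \<sigma> permutes {1..m}}. of_int (sign \<sigma>) * (G \<sigma> :: 'r::ring_1))"
proof -
  have tp: "tau i i' permutes {1..m}" using assms by (intro permutes_swap_id) auto
  have "(\<Sum>\<sigma>\<in>{\<sigma>. \<sigma> permutes {1..m}}. of_int (sign \<sigma>) * G (\<sigma> \<circ> tau i i'))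
      = (\<Sum>\<sigma>\<in>{\<sigma>. \<sigma> permutes {1..m}}. of_int (sign (\<sigma> \<circ> tau i i')) * G (\<sigma> \<circ> tau i i' \<circ> tau i i'))"
    by (rule sum_permutations_compose_right[OF tp])
  also have "\<dots> = (\<Sum>\<sigma>\<in>{\<sigma>. \<sigma> permutes {1..m}}. - (of_int (sign \<sigma>) * G \<sigma>))"
  proof (rule sum.cong[OF refl])
    fix \<sigma> assume "\<sigma> \<in> {\<sigma>. \<sigma> permutes {1..m}}"
    then have "permutation \<sigma>" by (auto intro: permutes_imp_permutation)
    moreover have "permutation (tau i i')" using tp by (auto intro: permutes_imp_permutation)
    ultimately have "sign (\<sigma> \<circ> tau i i') = - sign \<sigma>"
      using assms by (simp add: sign_compose sign_swap_id)
    moreover have "\<sigma> \<circ> tau i i' \<circ> tau i i' = \<sigma>" by (simp add: comp_assoc)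
    ultimately show "of_int (sign (\<sigma> \<circ> tau i i')) * G (\<sigma> \<circ> tau i i' \<circ> tau i i') = - (of_int (sign \<sigma>) * G \<sigma>)"
      by simp
  qed
  finally show ?thesis by (simp add: sum_negf)
qed


lemma prodR_split: "lo \<le> Suc mid \<Longrightarrow> mid \<le> hi \<Longrightarrow> prodR F lo hi r d = prodR F lo mid r d * prodR F (Suc mid) hi r d"
proof -
  assume h: "lo \<le> Suc mid" "mid \<le> hi"
  have "[lo..<Suc hi] = [lo..<Suc mid] @ [Suc mid..<Suc hi]"
    using upt_add_eq_append[of lo "Suc mid" "hi - mid"] h by simp
  then show ?thesis unfolding prodR_def by simp
qed

lemma sum4: fixes A B C D p q :: "'r::ab_group_add"
  assumes "A - p = B - q" "C - q = D - p" shows "(B + D) - (A + C) = 0"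
proof -
  have e1: "A + q = B + p" using assms(1) by (simp add: algebra_simps)
  have e2: "C + p = D + q" using assms(2) by (simp add: algebra_simps)
  have "(A + q) + (C + p) = (B + p) + (D + q)" using e1 e2 by simp
  then have "(A + C) + (p + q) = (B + D) + (p + q)" by (simp add: add_ac)
  then have "A + C = B + D" by simp
  then show ?thesis by simp
qed

lemma minor_adj:
  fixes F :: "nat \<Rightarrow> nat \<Rightarrow> nat \<Rightarrow> 'r::ring_1"
  assumes Diag: "\<And>x y z w. F j x y * F (Suc j) z w - F (Suc j) z w * F j x y = F j z y * F (Suc j) x w - F (Suc j) z y * F j x w"
    and two: "\<And>x::'r. x + x = 0 \<Longrightarrow> x = 0"
    and j: "1 \<le> j" "j < m"
  shows "minorP F m a (b \<circ> tau j (Suc j)) = - minorP F m a b"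
proof -
  let ?P = "{\<sigma>. \<sigma> permutes {1..m}}"
  let ?t = "tau j (Suc j)"
  have split: "prodR F 1 m r d = prodR F 1 (j - 1) r d * (F j (r j) (d j) * F (Suc j) (r (Suc j)) (d (Suc j))) * prodR F (Suc (Suc j)) m r d" for r d
  proof -
    have "prodR F 1 m r d = prodR F 1 (j - 1) r d * prodR F j m r d"
      using prodR_split[of 1 "j - 1" m F r d] j by simp
    also have "prodR F j m r d = F j (r j) (d j) * (F (Suc j) (r (Suc j)) (d (Suc j)) * prodR F (Suc (Suc j)) m r d)"
      using j by (simp add: prodR_Cons)
    finally show ?thesis by (simp add: mult.assoc)
  qed
  define H where "H = (\<lambda>\<sigma>. prodR F 1 m (a \<circ> \<sigma>) b + prodR F 1 m (a \<circ> \<sigma>) (b \<circ> ?t))"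
  have Hs: "H (\<sigma> \<circ> ?t) = H \<sigma>" for \<sigma>
  proof -
    let ?r = "a \<circ> \<sigma>" and ?r' = "a \<circ> (\<sigma> \<circ> ?t)" and ?d = "b \<circ> ?t"
    let ?x = "?r j" and ?z = "?r (Suc j)" and ?y = "b j" and ?w = "b (Suc j)"
    have P: "prodR F 1 (j - 1) ?r' b = prodR F 1 (j - 1) ?r b" "prodR F 1 (j - 1) ?r' ?d = prodR F 1 (j - 1) ?r b"
      "prodR F 1 (j - 1) ?r ?d = prodR F 1 (j - 1) ?r b"
      by (rule prodR_cong; auto simp: transpose_def)+
    have S: "prodR F (Suc (Suc j)) m ?r' b = prodR F (Suc (Suc j)) m ?r b" "prodR F (Suc (Suc j)) m ?r' ?d = prodR F (Suc (Suc j)) m ?r b"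
      "prodR F (Suc (Suc j)) m ?r ?d = prodR F (Suc (Suc j)) m ?r b"
      by (rule prodR_cong; auto simp: transpose_def)+
    have v: "?r' j = ?z" "?r' (Suc j) = ?x" "?d j = ?w" "?d (Suc j) = ?y"
      by (auto simp: transpose_def)
    let ?A = "prodR F 1 (j - 1) ?r b" and ?B = "prodR F (Suc (Suc j)) m ?r b"
    have "H (\<sigma> \<circ> ?t) - H \<sigma> = ?A * ((F j ?z ?y * F (Suc j) ?x ?w + F j ?z ?w * F (Suc j) ?x ?y)
        - (F j ?x ?y * F (Suc j) ?z ?w + F j ?x ?w * F (Suc j) ?z ?y)) * ?B"
      unfolding H_def split[of ?r'] split[of ?r] split[of ?r' ?d] split[of ?r ?d] P S v
      by (simp only: distrib_left distrib_right left_diff_distrib right_diff_distrib)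
    also have "(F j ?z ?y * F (Suc j) ?x ?w + F j ?z ?w * F (Suc j) ?x ?y)
        - (F j ?x ?y * F (Suc j) ?z ?w + F j ?x ?w * F (Suc j) ?z ?y) = 0"
      by (rule sum4[OF Diag[of ?x ?y ?z ?w] Diag[of ?x ?w ?z ?y]])
    finally have "H (\<sigma> \<circ> ?t) - H \<sigma> = 0" by (simp only: mult_zero_right mult_zero_left)
    then show ?thesis by (rule iffD1[OF right_minus_eq])
  qed
  define S where "S = (\<Sum>\<sigma>\<in>?P. of_int (sign \<sigma>) * H \<sigma>)"
  have "(\<Sum>\<sigma>\<in>?P. of_int (sign \<sigma>) * H (\<sigma> \<circ> ?t)) = S" by (simp only: Hs S_def)
  then have "S = - S"
    using sum_perm_swap[of j "Suc j" m H] j unfolding S_def by simp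
  then have "S = 0" using two[of S] by (simp add: eq_neg_iff_add_eq_0)
  moreover have "S = minorP F m a b + minorP F m a (b \<circ> ?t)"
    unfolding S_def H_def minorP_def by (simp add: distrib_left sum.distrib)
  ultimately show ?thesis by (simp add: eq_neg_iff_add_eq_0 add.commute)
qed

lemma minor_anti:
  fixes F :: "nat \<Rightarrow> nat \<Rightarrow> nat \<Rightarrow> 'r::ring_1"
  assumes Diag: "\<And>j x y z w. 1 \<le> j \<Longrightarrow> j < m \<Longrightarrow> F j x y * F (Suc j) z w - F (Suc j) z w * F j x y = F j z y * F (Suc j) x w - F (Suc j) z y * F j x w"
    and two: "\<And>x::'r. x + x = 0 \<Longrightarrow> x = 0"
  shows "1 \<le> i \<Longrightarrow> i < i' \<Longrightarrow> i' \<le> m \<Longrightarrow> minorP F m a (b \<circ> tau i i') = - minorP F m a b"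
proof -
  have adj: "minorP F m a (b \<circ> tau j (Suc j)) = - minorP F m a b" if "1 \<le> j" "j < m" for j b
  proof -
    have D: "\<And>x y z w. F j x y * F (Suc j) z w - F (Suc j) z w * F j x y = F j z y * F (Suc j) x w - F (Suc j) z y * F j x w"
      using Diag that by blast
    show ?thesis by (rule minor_adj[OF D two that])
  qed
  show "1 \<le> i \<Longrightarrow> i < i' \<Longrightarrow> i' \<le> m \<Longrightarrow> minorP F m a (b \<circ> tau i i') = - minorP F m a b"
proof (induction i' arbitrary: b)
  case 0 then show ?case by simp
next
  case (Suc i'')
  show ?case
  proof (cases "i = i''")
    case True
    then show ?thesis using adj[of i'' b] Suc.prems by (simp del: comp_apply)
  next
    case False
    then have h: "i < i''" using Suc.prems by simp
    let ?A = "tau i'' (Suc i'')" and ?B = "tau i i''"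
    have "?A \<circ> ?B \<circ> ?A = tau i (Suc i'')"
      using transpose_comp_triple[of "Suc i''" i i''] h by (simp add: transpose_commute)
    then have "b \<circ> tau i (Suc i'') = ((b \<circ> ?A) \<circ> ?B) \<circ> ?A" by (simp add: comp_assoc)
    then have "minorP F m a (b \<circ> tau i (Suc i'')) = - minorP F m a ((b \<circ> ?A) \<circ> ?B)"
      using adj[of i'' "(b \<circ> ?A) \<circ> ?B"] Suc.prems h by (simp del: comp_apply)
    also have "minorP F m a ((b \<circ> ?A) \<circ> ?B) = - minorP F m a (b \<circ> ?A)"
      using Suc.IH[of "b \<circ> ?A"] Suc.prems h by (simp del: comp_apply)
    also have "minorP F m a (b \<circ> ?A) = - minorP F m a b"
      using adj[of i'' b] Suc.prems h by (simp del: comp_apply)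
    finally show ?thesis by simp
  qed
qed
qed

locale mc =
  fixes e \<delta> :: "'r::ring_1" and T :: "nat \<Rightarrow> nat \<Rightarrow> 'r" and F :: "nat \<Rightarrow> nat \<Rightarrow> nat \<Rightarrow> 'r" and m :: nat
  assumes ce: "cent e" and cd: "cent \<delta>"
begin

definition EE :: "nat \<Rightarrow> 'r" where "EE i = e + of_nat (i - 1) * \<delta>"

lemma cEE: "cent (EE i)"
  unfolding EE_def by (intro cent_add cent_times ce cd cent_of_nat)

definition RL :: "nat \<Rightarrow> ((nat \<Rightarrow> nat) \<Rightarrow> (nat \<Rightarrow> nat) \<Rightarrow> 'r) \<Rightarrow> (nat \<Rightarrow> nat) \<Rightarrow> (nat \<Rightarrow> nat) \<Rightarrow> 'r" where
  "RL j N = (\<lambda>r d. EE j * N r d - \<delta> * N (r \<circ> tau 0 j) d)"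
definition RR :: "nat \<Rightarrow> ((nat \<Rightarrow> nat) \<Rightarrow> (nat \<Rightarrow> nat) \<Rightarrow> 'r) \<Rightarrow> (nat \<Rightarrow> nat) \<Rightarrow> (nat \<Rightarrow> nat) \<Rightarrow> 'r" where
  "RR j N = (\<lambda>r d. EE j * N r d - \<delta> * N r (d \<circ> tau 0 j))"

primrec QL where
  "QL 0 N = N" | "QL (Suc j) N = RL (Suc j) (QL j N)"
primrec QR where
  "QR 0 N = N" | "QR (Suc j) N = QR j (RR (Suc j) N)"

fun PE :: "nat \<Rightarrow> 'r" where
  "PE 0 = 1" | "PE (Suc 0) = 1" | "PE (Suc (Suc j)) = PE (Suc j) * EE (Suc (Suc j))"

lemma cPE: "cent (PE j)"
  by (induction j rule: PE.induct) (auto intro: cent_times cEE cent_one)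

definition W :: "nat \<Rightarrow> (nat \<Rightarrow> nat) \<Rightarrow> (nat \<Rightarrow> nat) \<Rightarrow> 'r" where
  "W j r d = prodR F 1 j r d * T (r 0) (d 0) * prodR F (Suc j) m r d"

lemma RL_RR: "RL j (RR i N) = RR i (RL j N)"
proof -
  have "\<And>a b c d'. EE j * (EE i * a - \<delta> * b) - \<delta> * (EE i * c - \<delta> * d') =
      EE i * (EE j * a - \<delta> * c) - \<delta> * (EE j * b - \<delta> * d')"
  proof -
    fix a b c d'
    have 1: "EE j * EE i = EE i * EE j" "EE j * \<delta> = \<delta> * EE j" "EE i * \<delta> = \<delta> * EE i"
      using cent_mult[OF cEE, of j "EE i"] cent_mult[OF cEE, of j \<delta>] cent_mult[OF cEE, of i \<delta>] by auto
    have "EE j * (EE i * a) = EE i * (EE j * a)" "EE j * (\<delta> * b) = \<delta> * (EE j * b)"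
      "\<delta> * (EE i * c) = EE i * (\<delta> * c)"
      by (simp_all add: mult.assoc[symmetric] 1)
    then show "EE j * (EE i * a - \<delta> * b) - \<delta> * (EE i * c - \<delta> * d') =
      EE i * (EE j * a - \<delta> * c) - \<delta> * (EE j * b - \<delta> * d')"
      by (simp add: right_diff_distrib)
  qed
  then show ?thesis unfolding RL_def RR_def by (simp add: comp_def)
qed

lemma RL_QR: "RL j (QR i N) = QR i (RL j N)"
  by (induction i arbitrary: N) (simp_all add: RL_RR)

lemma step:
  assumes Rel: "\<And>k l x y. EE j * (T k l * F j x y) - \<delta> * (T x l * F j k y) = EE j * (F j x y * T k l) - \<delta> * (F j x l * T k y)"
    and j: "1 \<le> j" "j \<le> m"
  shows "RL j (W (j - 1)) = RR j (W j)"
proof (intro ext)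
  fix r d
  let ?P = "prodR F 1 (j - 1) r d" and ?S = "prodR F (Suc j) m r d"
  have tj0: "(r \<circ> tau 0 j) 0 = r j" "(d \<circ> tau 0 j) 0 = d j" "(r \<circ> tau 0 j) j = r 0" "(d \<circ> tau 0 j) j = d 0"
    by (auto simp: transpose_def)
  have P1: "prodR F 1 (j - 1) (r \<circ> tau 0 j) d = ?P" "prodR F 1 (j - 1) r (d \<circ> tau 0 j) = ?P"
    by (rule prodR_cong; auto simp: transpose_def)+
  have S1: "prodR F (Suc j) m (r \<circ> tau 0 j) d = ?S" "prodR F (Suc j) m r (d \<circ> tau 0 j) = ?S"
    by (rule prodR_cong; auto simp: transpose_def)+
  have Wa: "W (j - 1) r' d' = prodR F 1 (j - 1) r' d' * (T (r' 0) (d' 0) * F j (r' j) (d' j)) * prodR F (Suc j) m r' d'" for r' d'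
    using j by (simp add: W_def prodR_Cons mult.assoc)
  have Wb: "W j r' d' = prodR F 1 (j - 1) r' d' * (F j (r' j) (d' j) * T (r' 0) (d' 0)) * prodR F (Suc j) m r' d'" for r' d'
  proof -
    have "prodR F 1 j r' d' = prodR F 1 (j - 1) r' d' * F j (r' j) (d' j)"
      using j prodR_snoc[of 1 "j - 1" F r' d'] by simp
    then show ?thesis by (simp add: W_def mult.assoc)
  qed
  have "RL j (W (j - 1)) r d = ?P * (EE j * (T (r 0) (d 0) * F j (r j) (d j)) - \<delta> * (T (r j) (d 0) * F j (r 0) (d j))) * ?S"
    unfolding RL_def by (simp only: Wa tj0 P1 S1 mid_comb[OF cEE cd])
  also have "\<dots> = ?P * (EE j * (F j (r j) (d j) * T (r 0) (d 0)) - \<delta> * (F j (r j) (d 0) * T (r 0) (d j))) * ?S"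
    using Rel by simp
  also have "\<dots> = RR j (W j) r d"
    unfolding RR_def by (simp only: Wb tj0 P1 S1 mid_comb[OF cEE cd])
  finally show "RL j (W (j - 1)) r d = RR j (W j) r d" .
qed

lemma chain:
  assumes Rel: "\<And>j k l x y. 1 \<le> j \<Longrightarrow> j \<le> m \<Longrightarrow> EE j * (T k l * F j x y) - \<delta> * (T x l * F j k y) = EE j * (F j x y * T k l) - \<delta> * (F j x l * T k y)"
  shows "j \<le> m \<Longrightarrow> QL j (W 0) = QR j (W j)"
proof (induction j)
  case 0 then show ?case by simp
next
  case (Suc j)
  have "QL (Suc j) (W 0) = RL (Suc j) (QR j (W j))" using Suc by simp
  also have "\<dots> = QR j (RL (Suc j) (W j))" by (rule RL_QR)
  also have "RL (Suc j) (W j) = RR (Suc j) (W (Suc j))"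
    using step[of "Suc j"] Rel[of "Suc j"] Suc.prems by simp
  finally show ?case by simp
qed


lemma perm_a: "i \<noteq> 0 \<Longrightarrow> i \<noteq> J \<Longrightarrow> J \<noteq> 0 \<Longrightarrow> tau 0 J \<circ> tau 0 i = tau i J \<circ> tau 0 J"
  by (auto simp: transpose_def fun_eq_iff)
lemma perm_b: "i \<noteq> 0 \<Longrightarrow> i \<noteq> J \<Longrightarrow> J \<noteq> 0 \<Longrightarrow> tau 0 i \<circ> tau 0 J = tau 0 J \<circ> tau i J"
  by (auto simp: transpose_def fun_eq_iff)
lemma perm_c: "i \<noteq> 0 \<Longrightarrow> i' \<noteq> 0 \<Longrightarrow> i \<noteq> J \<Longrightarrow> i' \<noteq> J \<Longrightarrow> tau i i' \<circ> tau 0 J = tau 0 J \<circ> tau i i'"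
  by (auto simp: transpose_def fun_eq_iff)

definition lin :: "(((nat \<Rightarrow> nat) \<Rightarrow> (nat \<Rightarrow> nat) \<Rightarrow> 'r) \<Rightarrow> 'r) \<Rightarrow> bool" where
  "lin \<Phi> \<longleftrightarrow> (\<forall>A B. \<Phi> (\<lambda>r d. A r d + B r d) = \<Phi> A + \<Phi> B) \<and> (\<forall>c A. cent c \<longrightarrow> \<Phi> (\<lambda>r d. c * A r d) = c * \<Phi> A)"

lemma lin_comb: assumes "lin \<Phi>" "cent c" "cent c'"
  shows "\<Phi> (\<lambda>r d. c * A r d - c' * B r d) = c * \<Phi> A - c' * \<Phi> B"
proof -
  have 1: "(\<lambda>r d. c * A r d - c' * B r d) = (\<lambda>r d. (\<lambda>r d. c * A r d) r d + (\<lambda>r d. (- c') * B r d) r d)"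
    by (simp add: fun_eq_iff)
  have 2: "\<Phi> (\<lambda>r d. (\<lambda>r d. c * A r d) r d + (\<lambda>r d. (- c') * B r d) r d) = \<Phi> (\<lambda>r d. c * A r d) + \<Phi> (\<lambda>r d. (- c') * B r d)"
  proof -
    have add: "\<And>A B. \<Phi> (\<lambda>r d. A r d + B r d) = \<Phi> A + \<Phi> B" using assms(1) unfolding lin_def by blast
    show ?thesis using add[of "\<lambda>r d. c * A r d" "\<lambda>r d. (- c') * B r d"] by simp
  qed
  have 3: "\<Phi> (\<lambda>r d. c * A r d) = c * \<Phi> A" "\<Phi> (\<lambda>r d. (- c') * B r d) = (- c') * \<Phi> B"
    using assms cent_uminus[OF assms(3)] unfolding lin_def by blast+
  show ?thesis unfolding 1 2 3 by simp
qed

definition antiL :: "(((nat \<Rightarrow> nat) \<Rightarrow> (nat \<Rightarrow> nat) \<Rightarrow> 'r) \<Rightarrow> 'r) \<Rightarrow> nat \<Rightarrow> bool" where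
  "antiL \<Phi> j \<longleftrightarrow> (\<forall>i i' N. 1 \<le> i \<longrightarrow> i < i' \<longrightarrow> i' \<le> j \<longrightarrow> \<Phi> (\<lambda>r d. N (r \<circ> tau i i') d) = - \<Phi> N)"
definition antiR :: "((nat \<Rightarrow> nat) \<Rightarrow> (nat \<Rightarrow> nat) \<Rightarrow> 'r) \<Rightarrow> nat \<Rightarrow> bool" where
  "antiR N j \<longleftrightarrow> (\<forall>i i' r d. 1 \<le> i \<longrightarrow> i < i' \<longrightarrow> i' \<le> j \<longrightarrow> N r (d \<circ> tau i i') = - N r d)"

lemma alg1:
  assumes "EJ = e + of_nat j * \<delta>"
  shows "e * (EJ * a - \<delta> * b) - \<delta> * (EJ * s + of_nat j * (\<delta> * b)) = EJ * (e * a - \<delta> * (s + b))"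
proof -
  have cEJ: "cent EJ" unfolding assms by (intro cent_add cent_times ce cd cent_of_nat)
  have 1: "e * (EJ * a) = EJ * (e * a)" "\<delta> * (EJ * s) = EJ * (\<delta> * s)"
    using cent_mult[OF cEJ, of e] cent_mult[OF cEJ, of \<delta>] by (simp_all only: mult.assoc[symmetric])
  have 2: "EJ * (\<delta> * b) = e * (\<delta> * b) + \<delta> * (of_nat j * (\<delta> * b))"
  proof -
    have "of_nat j * \<delta> = \<delta> * of_nat j" by (simp add: mult_of_nat_commute)
    then show ?thesis unfolding assms by (simp only: distrib_right mult.assoc)
  qed
  have "e * (EJ * a - \<delta> * b) - \<delta> * (EJ * s + of_nat j * (\<delta> * b)) = EJ * (e * a) - e * (\<delta> * b) - EJ * (\<delta> * s) - \<delta> * (of_nat j * (\<delta> * b))"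
    by (simp only: right_diff_distrib distrib_left 1 diff_diff_eq add.assoc)
  also have "\<dots> = EJ * (e * a) - EJ * (\<delta> * s) - EJ * (\<delta> * b)"
    unfolding 2 by (simp add: diff_diff_eq add_ac)
  also have "\<dots> = EJ * (e * a - \<delta> * (s + b))"
    by (simp add: right_diff_distrib distrib_left diff_diff_eq)
  finally show ?thesis .
qed

lemma EE_Suc: "EE (Suc j) = e + of_nat j * \<delta>" by (simp add: EE_def)

lemma twoR: "1 \<le> j \<Longrightarrow> antiR N j \<Longrightarrow> QR j N = (\<lambda>r d. PE j * (e * N r d - \<delta> * (\<Sum>i=1..j. N r (d \<circ> tau 0 i))))"
proof (induction j arbitrary: N rule: nat_induct_at_least)
  case base
  show ?case by (simp add: fun_eq_iff RR_def EE_def del: comp_apply)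
next
  case (Suc j)
  let ?J = "Suc j"
  let ?N = "RR ?J N"
  have aN: "antiR ?N j"
    unfolding antiR_def
  proof (intro allI impI)
    fix i i' :: nat and r d :: "nat \<Rightarrow> nat" assume h: "1 \<le> i" "i < i'" "i' \<le> j"
    have "d \<circ> tau i i' \<circ> tau 0 ?J = (d \<circ> tau 0 ?J) \<circ> tau i i'"
      using perm_c[of i i' ?J] h by (simp add: comp_assoc)
    moreover have "N r (d \<circ> tau i i') = - N r d" "N r ((d \<circ> tau 0 ?J) \<circ> tau i i') = - N r (d \<circ> tau 0 ?J)"
      using Suc.prems h unfolding antiR_def by auto
    ultimately show "?N r (d \<circ> tau i i') = - ?N r d"
      unfolding RR_def by (simp add: algebra_simps)
  qed
  have IH: "QR j ?N = (\<lambda>r d. PE j * (e * ?N r d - \<delta> * (\<Sum>i=1..j. ?N r (d \<circ> tau 0 i))))"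
    using Suc.IH[OF aN] .
  show ?case
  proof (intro ext)
    fix r d
    have t: "?N r (d \<circ> tau 0 i) = EE ?J * N r (d \<circ> tau 0 i) + \<delta> * N r (d \<circ> tau 0 ?J)" if "i \<in> {1..j}" for i
    proof -
      have "d \<circ> tau 0 i \<circ> tau 0 ?J = (d \<circ> tau 0 ?J) \<circ> tau i ?J"
        using perm_b[of i ?J] that by (simp add: comp_assoc)
      moreover have "N r ((d \<circ> tau 0 ?J) \<circ> tau i ?J) = - N r (d \<circ> tau 0 ?J)"
        using Suc.prems that unfolding antiR_def by auto
      ultimately show ?thesis unfolding RR_def by simp
    qed
    have s: "(\<Sum>i=1..j. ?N r (d \<circ> tau 0 i)) = EE ?J * (\<Sum>i=1..j. N r (d \<circ> tau 0 i)) + of_nat j * (\<delta> * N r (d \<circ> tau 0 ?J))"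
      by (simp add: t sum.distrib sum_distrib_left)
    have "QR ?J N r d = PE j * (e * (EE ?J * N r d - \<delta> * N r (d \<circ> tau 0 ?J)) - \<delta> * (EE ?J * (\<Sum>i=1..j. N r (d \<circ> tau 0 i)) + of_nat j * (\<delta> * N r (d \<circ> tau 0 ?J))))"
      using IH s by (simp add: RR_def)
    also have "\<dots> = PE j * EE ?J * (e * N r d - \<delta> * ((\<Sum>i=1..j. N r (d \<circ> tau 0 i)) + N r (d \<circ> tau 0 ?J)))"
      by (simp add: alg1[OF EE_Suc] mult.assoc)
    also have "\<dots> = PE ?J * (e * N r d - \<delta> * (\<Sum>i=1..?J. N r (d \<circ> tau 0 i)))"
      using Suc.hyps by (cases j) auto
    finally show "QR ?J N r d = PE ?J * (e * N r d - \<delta> * (\<Sum>i=1..?J. N r (d \<circ> tau 0 i)))" .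
  qed
qed

lemma twoL: "1 \<le> j \<Longrightarrow> lin \<Phi> \<Longrightarrow> antiL \<Phi> j \<Longrightarrow> \<Phi> (QL j N) = PE j * (e * \<Phi> N - \<delta> * (\<Sum>i=1..j. \<Phi> (\<lambda>r d. N (r \<circ> tau 0 i) d)))"
proof (induction j arbitrary: \<Phi> N rule: nat_induct_at_least)
  case base
  have "EE 1 = e" by (simp add: EE_def)
  then show ?case using lin_comb[OF base(1) cEE cd, of 1 N "\<lambda>r d. N (r \<circ> tau 0 1) d"] by (simp add: RL_def del: comp_apply)
next
  case (Suc j)
  let ?J = "Suc j"
  define \<Psi> where "\<Psi> = (\<lambda>X. \<Phi> (RL ?J X))"
  have lP: "lin \<Psi>"
    unfolding lin_def
  proof (intro conjI allI impI)
    fix A B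
    have "RL ?J (\<lambda>r d. A r d + B r d) = (\<lambda>r d. RL ?J A r d + RL ?J B r d)"
      by (simp add: RL_def fun_eq_iff algebra_simps)
    then show "\<Psi> (\<lambda>r d. A r d + B r d) = \<Psi> A + \<Psi> B"
      using Suc.prems(1) unfolding \<Psi>_def lin_def by simp
  next
    fix c A assume c: "cent (c::'r)"
    have "EE ?J * (c * x) - \<delta> * (c * y) = c * (EE ?J * x - \<delta> * y)" for x y
      using cent_mult[OF c, of "EE ?J"] cent_mult[OF c, of \<delta>]
      by (simp add: right_diff_distrib mult.assoc[symmetric])
    then have "RL ?J (\<lambda>r d. c * A r d) = (\<lambda>r d. c * RL ?J A r d)"
      by (simp add: RL_def fun_eq_iff)
    then show "\<Psi> (\<lambda>r d. c * A r d) = c * \<Psi> A"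
      using Suc.prems(1) c unfolding \<Psi>_def lin_def by simp
  qed
  have aP: "antiL \<Psi> j"
    unfolding antiL_def
  proof (intro allI impI)
    fix i i' N assume h: "1 \<le> (i::nat)" "i < i'" "i' \<le> j"
    have h2: "r \<circ> tau 0 ?J \<circ> tau i i' = r \<circ> tau i i' \<circ> tau 0 ?J" for r :: "nat \<Rightarrow> nat"
      using perm_c[of i i' ?J] h by (simp add: comp_assoc)
    have "RL ?J (\<lambda>r d. N (r \<circ> tau i i') d) = (\<lambda>r d. RL ?J N (r \<circ> tau i i') d)"
      by (simp only: RL_def h2)
    then show "\<Psi> (\<lambda>r d. N (r \<circ> tau i i') d) = - \<Psi> N"
      using Suc.prems(2) h unfolding \<Psi>_def antiL_def by simp
  qed
  have IH: "\<Psi> (QL j N) = PE j * (e * \<Psi> N - \<delta> * (\<Sum>i=1..j. \<Psi> (\<lambda>r d. N (r \<circ> tau 0 i) d)))"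
    using Suc.IH[OF lP aP] .
  have P0: "\<Psi> N = EE ?J * \<Phi> N - \<delta> * \<Phi> (\<lambda>r d. N (r \<circ> tau 0 ?J) d)"
    unfolding \<Psi>_def RL_def by (rule lin_comb[OF Suc.prems(1) cEE cd])
  have t: "\<Psi> (\<lambda>r d. N (r \<circ> tau 0 i) d) = EE ?J * \<Phi> (\<lambda>r d. N (r \<circ> tau 0 i) d) + \<delta> * \<Phi> (\<lambda>r d. N (r \<circ> tau 0 ?J) d)"
    if "i \<in> {1..j}" for i
  proof -
    have h1: "r \<circ> tau 0 ?J \<circ> tau 0 i = r \<circ> tau i ?J \<circ> tau 0 ?J" for r :: "nat \<Rightarrow> nat"
      using perm_a[of i ?J] that by (simp add: comp_assoc)
    have h2: "(\<lambda>r d. N (r \<circ> tau 0 ?J \<circ> tau 0 i) d) = (\<lambda>r d. (\<lambda>r d. N (r \<circ> tau 0 ?J) d) (r \<circ> tau i ?J) d)"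
      by (simp only: h1)
    have anti: "\<And>M. \<Phi> (\<lambda>r d. M (r \<circ> tau i ?J) d) = - \<Phi> M"
      using Suc.prems(2) that unfolding antiL_def by auto
    have "\<Psi> (\<lambda>r d. N (r \<circ> tau 0 i) d) = \<Phi> (\<lambda>r d. EE ?J * N (r \<circ> tau 0 i) d - \<delta> * N (r \<circ> tau 0 ?J \<circ> tau 0 i) d)"
      by (simp only: \<Psi>_def RL_def)
    also have "\<dots> = EE ?J * \<Phi> (\<lambda>r d. N (r \<circ> tau 0 i) d) - \<delta> * \<Phi> (\<lambda>r d. N (r \<circ> tau 0 ?J \<circ> tau 0 i) d)"
      by (rule lin_comb[OF Suc.prems(1) cEE cd])
    also have "\<Phi> (\<lambda>r d. N (r \<circ> tau 0 ?J \<circ> tau 0 i) d) = - \<Phi> (\<lambda>r d. N (r \<circ> tau 0 ?J) d)"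
      unfolding h2 by (rule anti)
    finally show ?thesis by (simp only: diff_minus_eq_add mult_minus_right)
  qed
  have s: "(\<Sum>i=1..j. \<Psi> (\<lambda>r d. N (r \<circ> tau 0 i) d)) = EE ?J * (\<Sum>i=1..j. \<Phi> (\<lambda>r d. N (r \<circ> tau 0 i) d)) + of_nat j * (\<delta> * \<Phi> (\<lambda>r d. N (r \<circ> tau 0 ?J) d))"
    by (simp add: t sum.distrib sum_distrib_left)
  have "\<Phi> (QL ?J N) = \<Psi> (QL j N)" by (simp add: \<Psi>_def)
  also have "\<dots> = PE j * (e * (EE ?J * \<Phi> N - \<delta> * \<Phi> (\<lambda>r d. N (r \<circ> tau 0 ?J) d)) - \<delta> * (EE ?J * (\<Sum>i=1..j. \<Phi> (\<lambda>r d. N (r \<circ> tau 0 i) d)) + of_nat j * (\<delta> * \<Phi> (\<lambda>r d. N (r \<circ> tau 0 ?J) d))))"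
    using IH P0 s by simp
  also have "\<dots> = PE j * EE ?J * (e * \<Phi> N - \<delta> * ((\<Sum>i=1..j. \<Phi> (\<lambda>r d. N (r \<circ> tau 0 i) d)) + \<Phi> (\<lambda>r d. N (r \<circ> tau 0 ?J) d)))"
    by (simp add: alg1[OF EE_Suc] mult.assoc)
  also have "\<dots> = PE ?J * (e * \<Phi> N - \<delta> * (\<Sum>i=1..?J. \<Phi> (\<lambda>r d. N (r \<circ> tau 0 i) d)))"
    using Suc.hyps by (cases j) auto
  finally show ?case .
qed

definition AL :: "((nat \<Rightarrow> nat) \<Rightarrow> (nat \<Rightarrow> nat) \<Rightarrow> 'r) \<Rightarrow> (nat \<Rightarrow> nat) \<Rightarrow> (nat \<Rightarrow> nat) \<Rightarrow> 'r" where
  "AL N = (\<lambda>r d. \<Sum>\<sigma>\<in>{\<sigma>. \<sigma> permutes {1..m}}. of_int (sign \<sigma>) * N (r \<circ> \<sigma>) d)"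

lemma AL_RR: "AL (RR i N) = RR i (AL N)"
proof -
  have "of_int z * (EE i * x - \<delta> * y) = EE i * (of_int z * x) - \<delta> * (of_int z * y)" for z x y
    using cent_mult[OF cEE, of i "of_int z"] cent_mult[OF cd, of "of_int z"]
    by (simp add: right_diff_distrib mult.assoc[symmetric])
  then show ?thesis
    unfolding AL_def RR_def by (simp add: fun_eq_iff sum_subtractf sum_distrib_left)
qed

lemma AL_QR: "AL (QR i N) = QR i (AL N)"
  by (induction i arbitrary: N) (simp_all add: AL_RR)


lemma AL_Wm: "AL (W m) r d = minorP F m r d * T (r 0) (d 0)"
proof -
  have w: "of_int (sign \<sigma>) * W m (r \<circ> \<sigma>) d = of_int (sign \<sigma>) * prodR F 1 m (r \<circ> \<sigma>) d * T (r 0) (d 0)"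
    if "\<sigma> \<in> {\<sigma>. \<sigma> permutes {1..m}}" for \<sigma>
  proof -
    have "W m (r \<circ> \<sigma>) d = prodR F 1 m (r \<circ> \<sigma>) d * T (r 0) (d 0)"
      unfolding W_def using perm0[OF that] by (simp add: prodR_empty)
    then show ?thesis by (simp only: mult.assoc)
  qed
  have "AL (W m) r d = (\<Sum>\<sigma>\<in>{\<sigma>. \<sigma> permutes {1..m}}. of_int (sign \<sigma>) * prodR F 1 m (r \<circ> \<sigma>) d * T (r 0) (d 0))"
    unfolding AL_def by (rule sum.cong[OF refl w])
  also have "\<dots> = minorP F m r d * T (r 0) (d 0)"
    unfolding minorP_def by (simp only: sum_distrib_right)
  finally show ?thesis .
qed

lemma PE_cancel:
  assumes canc: "\<forall>i x. 2 \<le> i \<longrightarrow> i \<le> m \<longrightarrow> EE i * x = 0 \<longrightarrow> x = 0"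
  shows "j \<le> m \<Longrightarrow> PE j * x = 0 \<Longrightarrow> x = 0"
proof (induction j arbitrary: x rule: PE.induct)
  case 1 then show ?case by simp
next
  case 2 then show ?case by simp
next
  case (3 j)
  have "PE (Suc j) * (EE (Suc (Suc j)) * x) = 0" using 3(3) by (simp add: mult.assoc)
  then have "EE (Suc (Suc j)) * x = 0" using 3(1) 3(2) by simp
  moreover have "2 \<le> Suc (Suc j)" by simp
  ultimately show ?case using canc 3(2) by blast
qed

theorem main_abstract:
  assumes Rel: "\<And>j k l x y. 1 \<le> j \<Longrightarrow> j \<le> m \<Longrightarrow> EE j * (T k l * F j x y) - \<delta> * (T x l * F j k y) = EE j * (F j x y * T k l) - \<delta> * (F j x l * T k y)"
    and anti: "\<And>a b i i'. 1 \<le> i \<Longrightarrow> i < i' \<Longrightarrow> i' \<le> m \<Longrightarrow> minorP F m a (b \<circ> tau i i') = - minorP F m a b"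
    and canc: "\<And>i x. 2 \<le> i \<Longrightarrow> i \<le> m \<Longrightarrow> EE i * x = 0 \<Longrightarrow> x = 0"
    and m1: "1 \<le> m"
  shows "e * (T k l * minorP F m a b - minorP F m a b * T k l) =
    \<delta> * ((\<Sum>i=1..m. T (a i) l * minorP F m (a(i := k)) b) - (\<Sum>i=1..m. minorP F m a (b(i := l)) * T k (b i)))"
proof -
  let ?P = "{\<sigma>. \<sigma> permutes {1..m}}"
  define r0 where "r0 = ext0 k a"
  define c0 where "c0 = ext0 l b"
  define \<Phi> where "\<Phi> = (\<lambda>N. AL N r0 c0)"
  have lP: "lin \<Phi>"
    unfolding lin_def
  proof (intro conjI allI impI)
    fix A B show "\<Phi> (\<lambda>r d. A r d + B r d) = \<Phi> A + \<Phi> B"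
      by (simp add: \<Phi>_def AL_def distrib_left sum.distrib)
  next
    fix c A assume c: "cent (c::'r)"
    have "of_int z * (c * x) = c * (of_int z * x)" for z x
      using cent_mult[OF c, of "of_int z"] by (simp add: mult.assoc[symmetric])
    then show "\<Phi> (\<lambda>r d. c * A r d) = c * \<Phi> A"
      by (simp add: \<Phi>_def AL_def sum_distrib_left)
  qed
  have aP: "antiL \<Phi> m"
    unfolding antiL_def
  proof (intro allI impI)
    fix i i' N assume h: "1 \<le> (i::nat)" "i < i'" "i' \<le> m"
    show "\<Phi> (\<lambda>r d. N (r \<circ> tau i i') d) = - \<Phi> N"
      using sum_perm_swap[OF h, of "\<lambda>\<sigma>. N (r0 \<circ> \<sigma>) c0"]
      by (simp add: \<Phi>_def AL_def comp_assoc del: comp_apply)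
  qed
  have aR: "antiR (AL (W m)) m"
    unfolding antiR_def AL_Wm
  proof (intro allI impI)
    fix i i' :: nat and r d :: "nat \<Rightarrow> nat" assume h: "1 \<le> i" "i < i'" "i' \<le> m"
    have "(d \<circ> tau i i') 0 = d 0" using h by (simp add: transpose_def)
    then show "minorP F m r (d \<circ> tau i i') * T (r 0) ((d \<circ> tau i i') 0) = - (minorP F m r d * T (r 0) (d 0))"
      using anti[OF h] by simp
  qed
  have L: "\<Phi> (QL m (W 0)) = PE m * (e * \<Phi> (W 0) - \<delta> * (\<Sum>i=1..m. \<Phi> (\<lambda>r d. W 0 (r \<circ> tau 0 i) d)))"
    by (rule twoL[OF m1 lP aP])
  have "\<Phi> (QL m (W 0)) = \<Phi> (QR m (W m))" using chain[OF Rel] by simp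
  also have "\<dots> = QR m (AL (W m)) r0 c0" by (simp add: \<Phi>_def AL_QR)
  also have "\<dots> = PE m * (e * AL (W m) r0 c0 - \<delta> * (\<Sum>i=1..m. AL (W m) r0 (c0 \<circ> tau 0 i)))"
    by (simp add: twoR[OF m1 aR])
  finally have R: "\<Phi> (QL m (W 0)) = \<dots>" .
  have r00: "r0 0 = k" "c0 0 = l" by (simp_all add: r0_def c0_def ext0_def)
  have mr: "minorP F m r0 d = minorP F m a d" for d
    by (rule minorP_cong) (simp add: r0_def ext0_def)
  have mc: "minorP F m r c0 = minorP F m r b" for r
    by (rule minorP_cong) (simp add: c0_def ext0_def)
  have a: "\<Phi> (W 0) = T k l * minorP F m a b"
  proof -
    have "\<Phi> (W 0) = (\<Sum>\<sigma>\<in>?P. T k l * (of_int (sign \<sigma>) * prodR F 1 m (a \<circ> \<sigma>) b))"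
      unfolding \<Phi>_def AL_def W_def
    proof (intro sum.cong refl)
      fix \<sigma> assume s: "\<sigma> \<in> ?P"
      have "prodR F 1 m (r0 \<circ> \<sigma>) c0 = prodR F 1 m (a \<circ> \<sigma>) b"
      proof (rule prodR_cong)
        fix j assume "1 \<le> j" "j \<le> m"
        then have "\<sigma> j \<in> {1..m}" using perm_in[OF s, of j] by auto
        then show "(r0 \<circ> \<sigma>) j = (a \<circ> \<sigma>) j \<and> c0 j = b j" using \<open>1 \<le> j\<close> by (auto simp: r0_def c0_def ext0_def)
      qed
      then show "of_int (sign \<sigma>) * (prodR F 1 0 (r0 \<circ> \<sigma>) c0 * T ((r0 \<circ> \<sigma>) 0) (c0 0) * prodR F (Suc 0) m (r0 \<circ> \<sigma>) c0) =
          T k l * (of_int (sign \<sigma>) * prodR F 1 m (a \<circ> \<sigma>) b)"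
        using perm0[OF s] r00 by (simp add: prodR_empty) (metis mult.assoc mult_of_int_commute)
    qed
    then show ?thesis by (simp add: minorP_def sum_distrib_left)
  qed
  have b: "(\<Sum>i=1..m. \<Phi> (\<lambda>r d. W 0 (r \<circ> tau 0 i) d)) = (\<Sum>i=1..m. T (a i) l * minorP F m (a(i := k)) b)"
  proof -
    define g where "g = (\<lambda>\<sigma> i'. of_int (sign \<sigma>) * (T (a i') l * prodR F 1 m (a(i' := k) \<circ> \<sigma>) b))"
    have "(\<Sum>i=1..m. \<Phi> (\<lambda>r d. W 0 (r \<circ> tau 0 i) d)) = (\<Sum>i=1..m. \<Sum>\<sigma>\<in>?P. g \<sigma> (\<sigma> i))"
    proof (rule sum.cong[OF refl])
      fix i assume i: "i \<in> {1..m}"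
      have key: "of_int (sign \<sigma>) * W 0 (r0 \<circ> \<sigma> \<circ> tau 0 i) c0 = g \<sigma> (\<sigma> i)" if s: "\<sigma> \<in> ?P" for \<sigma>
      proof -
        have "prodR F 1 m (r0 \<circ> \<sigma> \<circ> tau 0 i) c0 = prodR F 1 m (a(\<sigma> i := k) \<circ> \<sigma>) b"
        proof (rule prodR_cong)
          fix j assume j: "1 \<le> j" "j \<le> m"
          have "\<sigma> j \<noteq> 0" using perm_in[OF s, of j] j by auto
          moreover have "j \<noteq> i \<Longrightarrow> \<sigma> j \<noteq> \<sigma> i"
            using s by (auto dest: permutes_inj inj_onD[where A=UNIV])
          ultimately show "(r0 \<circ> \<sigma> \<circ> tau 0 i) j = (a(\<sigma> i := k) \<circ> \<sigma>) j \<and> c0 j = b j"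
            using j perm0[OF s] by (auto simp: r0_def c0_def ext0_def transpose_def)
        qed
        moreover have "(r0 \<circ> \<sigma> \<circ> tau 0 i) 0 = a (\<sigma> i)"
          using perm_in[OF s i] by (auto simp: r0_def ext0_def transpose_def)
        ultimately show "of_int (sign \<sigma>) * W 0 (r0 \<circ> \<sigma> \<circ> tau 0 i) c0 = g \<sigma> (\<sigma> i)"
          unfolding W_def g_def using r00 by (simp add: prodR_empty del: comp_apply)
      qed
      show "\<Phi> (\<lambda>r d. W 0 (r \<circ> tau 0 i) d) = (\<Sum>\<sigma>\<in>?P. g \<sigma> (\<sigma> i))"
        unfolding \<Phi>_def AL_def using key by (intro sum.cong refl) (simp only: comp_assoc)
    qed
    also have "\<dots> = (\<Sum>\<sigma>\<in>?P. \<Sum>i=1..m. g \<sigma> (\<sigma> i))" by (rule sum.swap)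
    also have "\<dots> = (\<Sum>\<sigma>\<in>?P. \<Sum>i=1..m. g \<sigma> i)"
    proof (rule sum.cong[OF refl])
      fix \<sigma> assume s: "\<sigma> \<in> ?P"
      show "(\<Sum>i=1..m. g \<sigma> (\<sigma> i)) = (\<Sum>i=1..m. g \<sigma> i)"
        using sum.reindex_bij_betw[OF permutes_imp_bij[of \<sigma> "{1..m}"], of "g \<sigma>"] s by simp
    qed
    also have "\<dots> = (\<Sum>i=1..m. \<Sum>\<sigma>\<in>?P. g \<sigma> i)" by (rule sum.swap)
    also have "\<dots> = (\<Sum>i=1..m. T (a i) l * minorP F m (a(i := k)) b)"
      unfolding g_def minorP_def sum_distrib_left of_int_mid by (rule refl)
    finally show ?thesis .
  qed
  have c: "AL (W m) r0 c0 = minorP F m a b * T k l"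
    using AL_Wm r00 mr mc by simp
  have d: "(\<Sum>i=1..m. AL (W m) r0 (c0 \<circ> tau 0 i)) = (\<Sum>i=1..m. minorP F m a (b(i := l)) * T k (b i))"
  proof (intro sum.cong refl)
    fix i assume i: "i \<in> {1..m}"
    have "minorP F m r0 (c0 \<circ> tau 0 i) = minorP F m a (b(i := l))"
      by (rule minorP_cong) (use i in \<open>auto simp: r0_def c0_def ext0_def transpose_def\<close>)
    moreover have "(c0 \<circ> tau 0 i) 0 = b i" using i by (auto simp: c0_def ext0_def transpose_def)
    ultimately show "AL (W m) r0 (c0 \<circ> tau 0 i) = minorP F m a (b(i := l)) * T k (b i)"
      using AL_Wm r00 by simp
  qed
  have "PE m * (e * (T k l * minorP F m a b) - \<delta> * (\<Sum>i=1..m. T (a i) l * minorP F m (a(i := k)) b))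
      = PE m * (e * (minorP F m a b * T k l) - \<delta> * (\<Sum>i=1..m. minorP F m a (b(i := l)) * T k (b i)))"
    by (subst L[symmetric, unfolded a b]) (rule R[unfolded c d])
  then have "PE m * ((e * (T k l * minorP F m a b) - \<delta> * (\<Sum>i=1..m. T (a i) l * minorP F m (a(i := k)) b))
      - (e * (minorP F m a b * T k l) - \<delta> * (\<Sum>i=1..m. minorP F m a (b(i := l)) * T k (b i)))) = 0"
    by (simp add: right_diff_distrib)
  then have "(e * (T k l * minorP F m a b) - \<delta> * (\<Sum>i=1..m. T (a i) l * minorP F m (a(i := k)) b))
      - (e * (minorP F m a b * T k l) - \<delta> * (\<Sum>i=1..m. minorP F m a (b(i := l)) * T k (b i))) = 0"
  proof -
    have "\<forall>i x. 2 \<le> i \<longrightarrow> i \<le> m \<longrightarrow> EE i * x = 0 \<longrightarrow> x = 0" using canc by blast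
    from PE_cancel[OF this order_refl] show ?thesis using \<open>PE m * _ = 0\<close> .
  qed
  then have "e * (T k l * minorP F m a b) - e * (minorP F m a b * T k l) =
    \<delta> * (\<Sum>i=1..m. T (a i) l * minorP F m (a(i := k)) b) - \<delta> * (\<Sum>i=1..m. minorP F m a (b(i := l)) * T k (b i))"
    by (rule diff4)
  then show ?thesis by (simp only: right_diff_distrib)
qed
end


lemma ca_add: "complex_alg sc \<Longrightarrow> sc (x + y) = sc x + sc y" unfolding complex_alg_def by blast
lemma ca_mult: "complex_alg sc \<Longrightarrow> sc (x * y) = sc x * sc y" unfolding complex_alg_def by blast
lemma ca_one: "complex_alg sc \<Longrightarrow> sc 1 = 1" unfolding complex_alg_def by blast
lemma ca_comm: "complex_alg sc \<Longrightarrow> sc x * a = a * sc x" unfolding complex_alg_def by blast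
lemma ca_zero: "complex_alg sc \<Longrightarrow> sc 0 = 0"
proof -
  assume a: "complex_alg sc"
  have "sc (0 + 0) = sc 0 + sc 0" by (rule ca_add[OF a])
  then show ?thesis by simp
qed
lemma ca_uminus: "complex_alg sc \<Longrightarrow> sc (- x) = - sc x"
proof -
  assume a: "complex_alg sc"
  have "sc (x + - x) = sc x + sc (- x)" by (rule ca_add[OF a])
  then have "sc x + sc (- x) = 0" using ca_zero[OF a] by simp
  then show ?thesis by (simp add: neg_eq_iff_add_eq_0[symmetric])
qed
lemma ca_diff: "complex_alg sc \<Longrightarrow> sc (x - y) = sc x - sc y"
  using ca_add[of sc x "- y"] ca_uminus[of sc y] by simp
lemma ca_sum: "complex_alg sc \<Longrightarrow> sc (sum f A) = (\<Sum>x\<in>A. sc (f x))"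
  by (induction A rule: infinite_finite_induct) (auto simp: ca_zero ca_add)
lemma ca_cent: "complex_alg sc \<Longrightarrow> cent (sc x)"
  by (simp add: cent_def ca_comm)
lemma ca_id: "complex_alg (\<lambda>x::complex. x)"
  by (simp add: complex_alg_def)

definition smap :: "(complex \<Rightarrow> 'b::ring_1) \<Rightarrow> complex fps \<Rightarrow> 'b fps" where
  "smap sc z = Abs_fps (\<lambda>n. sc (z $ n))"

lemma smap_nth[simp]: "smap sc z $ n = sc (z $ n)" by (simp add: smap_def)

definition Ev :: "(complex \<Rightarrow> 'b::ring_1) \<Rightarrow> complex fps \<Rightarrow> 'b fps \<Rightarrow> 'b fps" where
  "Ev sc G f = Abs_fps (\<lambda>N. \<Sum>r\<le>N. f $ r * sc ((G ^ r) $ N))"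

lemma Ev_nth: "Ev sc G f $ N = (\<Sum>r\<le>N. f $ r * sc ((G ^ r) $ N))"
  by (simp add: Ev_def)

lemma Ev_nth_ext:
  assumes sc: "complex_alg sc" and G0: "G $ 0 = 0" and iK: "i \<le> K"
  shows "Ev sc G f $ i = (\<Sum>r\<le>K. f $ r * sc ((G ^ r) $ i))"
proof -
  have "(\<Sum>r\<le>K. f $ r * sc ((G ^ r) $ i)) = (\<Sum>r\<le>i. f $ r * sc ((G ^ r) $ i))"
  proof (rule sum.mono_neutral_right)
    show "\<forall>r\<in>{..K} - {..i}. f $ r * sc ((G ^ r) $ i) = 0"
      using startsby_zero_power_prefix[OF G0] ca_zero[OF sc] by auto
  qed (use iK in auto)
  then show ?thesis by (simp add: Ev_nth)
qed

lemma Ev_add: "Ev sc G (f + h) = Ev sc G f + Ev sc G h"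
  by (simp add: fps_eq_iff Ev_nth distrib_right sum.distrib)
lemma Ev_uminus: "Ev sc G (- f) = - Ev sc G f"
  by (simp add: fps_eq_iff Ev_nth sum_negf)
lemma Ev_diff: "Ev sc G (f - h) = Ev sc G f - Ev sc G h"
  using Ev_add[of sc G f "- h"] Ev_uminus[of sc G h] by simp
lemma Ev_zero: "Ev sc G 0 = 0"
  by (simp add: fps_eq_iff Ev_nth)
lemma Ev_sum: "Ev sc G (sum f A) = (\<Sum>x\<in>A. Ev sc G (f x))"
  by (induction A rule: infinite_finite_induct) (auto simp: Ev_zero Ev_add)

lemma Ev_const: assumes "complex_alg sc" shows "Ev sc G (fps_const c) = fps_const c"
proof -
  have "Ev sc G (fps_const c) $ N = fps_const c $ N" for N
  proof -
    have "Ev sc G (fps_const c) $ N = (\<Sum>r\<le>N. (if r = 0 then c * sc ((G ^ r) $ N) else 0))"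
      unfolding Ev_nth by (intro sum.cong refl) simp
    also have "\<dots> = c * sc ((G ^ 0) $ N)" by (simp add: sum.delta)
    finally show ?thesis using assms by (cases N) (simp_all add: ca_one ca_zero)
  qed
  then show ?thesis by (simp add: fps_eq_iff)
qed

lemma Ev_one: "complex_alg sc \<Longrightarrow> Ev sc G 1 = 1"
  using Ev_const[of sc G 1] by simp

lemma Ev_X: assumes "complex_alg sc" and G0: "G $ 0 = 0" shows "Ev sc G fps_X = smap sc G"
proof -
  have "Ev sc G fps_X $ N = smap sc G $ N" for N
  proof (cases N)
    case 0 then show ?thesis using assms G0 by (simp add: Ev_nth fps_X_def ca_zero)
  next
    case (Suc M)
    have "Ev sc G fps_X $ N = (\<Sum>r\<le>N. (if r = 1 then sc ((G ^ r) $ N) else 0))"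
      unfolding Ev_nth by (intro sum.cong refl) (simp add: fps_X_def)
    also have "\<dots> = sc (G $ N)" using Suc by (simp add: sum.delta)
    finally show ?thesis by simp
  qed
  then show ?thesis by (simp add: fps_eq_iff)
qed

lemma Ev_mult:
  assumes sc: "complex_alg sc" and G0: "G $ 0 = 0"
  shows "Ev sc G (f * h) = Ev sc G f * Ev sc G h"
proof -
  have "Ev sc G (f * h) $ N = (Ev sc G f * Ev sc G h) $ N" for N
  proof -
    define c where "c = (\<lambda>q. sc ((G ^ q) $ N))"
    have c0: "q > N \<Longrightarrow> c q = 0" for q
      using startsby_zero_power_prefix[OF G0] ca_zero[OF sc] by (auto simp: c_def)
    define g where "g = (\<lambda>r s. f $ r * h $ s * c (r + s))"
    have "Ev sc G (f * h) $ N = (\<Sum>q\<le>N. \<Sum>r\<le>q. f $ r * h $ (q - r) * c q)"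
      unfolding Ev_nth fps_mult_nth c_def atLeast0AtMost by (simp add: sum_distrib_right)
    also have "\<dots> = (\<Sum>q\<le>N. \<Sum>r\<le>q. g r (q - r))"
      by (intro sum.cong refl) (simp add: g_def)
    also have "\<dots> = (\<Sum>(r, s)\<in>{(r, s). r + s \<le> N}. g r s)"
      by (rule sum.triangle_reindex_eq[symmetric])
    also have "\<dots> = (\<Sum>(r, s)\<in>{..N} \<times> {..N}. g r s)"
    proof (rule sum.mono_neutral_left)
      show "\<forall>x\<in>{..N} \<times> {..N} - {(r, s). r + s \<le> N}. (case x of (r, s) \<Rightarrow> g r s) = 0"
      proof
        fix x assume x: "x \<in> {..N} \<times> {..N} - {(r, s). r + s \<le> N}"
        obtain r s where rs: "x = (r, s)" by (cases x)
        then have "N < r + s" using x by auto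
        then show "(case x of (r, s) \<Rightarrow> g r s) = 0" using rs c0 by (simp add: g_def)
      qed
    qed auto
    also have "\<dots> = (\<Sum>r\<le>N. \<Sum>s\<le>N. g r s)"
      by (rule sum.cartesian_product[symmetric])
    also have "\<dots> = (\<Sum>r\<le>N. \<Sum>s\<le>N. \<Sum>i=0..N. f $ r * sc ((G ^ r) $ i) * (h $ s * sc ((G ^ s) $ (N - i))))"
    proof (intro sum.cong refl)
      fix r s
      have "c (r + s) = (\<Sum>i=0..N. sc ((G ^ r) $ i) * sc ((G ^ s) $ (N - i)))"
        unfolding c_def power_add fps_mult_nth using sc by (simp add: ca_sum ca_mult)
      then have "g r s = (\<Sum>i=0..N. f $ r * h $ s * (sc ((G ^ r) $ i) * sc ((G ^ s) $ (N - i))))"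
        unfolding g_def by (simp add: sum_distrib_left)
      also have "\<dots> = (\<Sum>i=0..N. f $ r * sc ((G ^ r) $ i) * (h $ s * sc ((G ^ s) $ (N - i))))"
      proof (intro sum.cong refl)
        fix i
        have "h $ s * sc ((G ^ r) $ i) = sc ((G ^ r) $ i) * h $ s" using ca_comm[OF sc] by simp
        then show "f $ r * h $ s * (sc ((G ^ r) $ i) * sc ((G ^ s) $ (N - i))) = f $ r * sc ((G ^ r) $ i) * (h $ s * sc ((G ^ s) $ (N - i)))"
          by (simp add: mult.assoc) (simp add: mult.assoc[symmetric])
      qed
      finally show "g r s = \<dots>" .
    qed
    also have "\<dots> = (\<Sum>i=0..N. (\<Sum>r\<le>N. f $ r * sc ((G ^ r) $ i)) * (\<Sum>s\<le>N. h $ s * sc ((G ^ s) $ (N - i))))"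
    proof -
      have "(\<Sum>i=0..N. (\<Sum>r\<le>N. f $ r * sc ((G ^ r) $ i)) * (\<Sum>s\<le>N. h $ s * sc ((G ^ s) $ (N - i))))
          = (\<Sum>i=0..N. \<Sum>r\<le>N. \<Sum>s\<le>N. f $ r * sc ((G ^ r) $ i) * (h $ s * sc ((G ^ s) $ (N - i))))"
        by (simp only: sum_product)
      also have "\<dots> = (\<Sum>r\<le>N. \<Sum>i=0..N. \<Sum>s\<le>N. f $ r * sc ((G ^ r) $ i) * (h $ s * sc ((G ^ s) $ (N - i))))"
        by (rule sum.swap)
      also have "\<dots> = (\<Sum>r\<le>N. \<Sum>s\<le>N. \<Sum>i=0..N. f $ r * sc ((G ^ r) $ i) * (h $ s * sc ((G ^ s) $ (N - i))))"
        by (rule sum.cong[OF refl], rule sum.swap)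
      finally show ?thesis by (rule sym)
    qed
    also have "\<dots> = (\<Sum>i=0..N. Ev sc G f $ i * Ev sc G h $ (N - i))"
      by (intro sum.cong refl) (simp add: Ev_nth_ext[OF sc G0, of _ N])
    also have "\<dots> = (Ev sc G f * Ev sc G h) $ N" by (simp add: fps_mult_nth)
    finally show ?thesis .
  qed
  then show ?thesis by (simp add: fps_eq_iff)
qed


lemma fps_cent: "(\<And>n. cent (f $ n)) \<Longrightarrow> cent (f :: 'b::ring_1 fps)"
proof -
  assume c: "\<And>n. cent (f $ n)"
  have "(f * g) $ n = (g * f) $ n" for g n
  proof -
    have "(g * f) $ n = (\<Sum>i=0..n. g $ (n + 0 - i) * f $ (n - (n + 0 - i)))"
      unfolding fps_mult_nth by (rule sum.atLeastAtMost_rev)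
    also have "\<dots> = (\<Sum>i=0..n. f $ i * g $ (n - i))"
      by (intro sum.cong refl) (use c in \<open>auto simp: cent_def\<close>)
    finally show ?thesis by (simp add: fps_mult_nth)
  qed
  then show ?thesis by (simp add: cent_def fps_eq_iff)
qed

lemma smap_add: "complex_alg sc \<Longrightarrow> smap sc (z + w) = smap sc z + smap sc w"
  by (simp add: fps_eq_iff ca_add)
lemma smap_diff: "complex_alg sc \<Longrightarrow> smap sc (z - w) = smap sc z - smap sc w"
  by (simp add: fps_eq_iff ca_diff)
lemma smap_uminus: "complex_alg sc \<Longrightarrow> smap sc (- z) = - smap sc z"
  by (simp add: fps_eq_iff ca_uminus)
lemma smap_mult: "complex_alg sc \<Longrightarrow> smap sc (z * w) = smap sc z * smap sc w"
  by (simp add: fps_eq_iff fps_mult_nth ca_sum ca_mult)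
lemma smap_one: "complex_alg sc \<Longrightarrow> smap sc 1 = 1"
  by (simp add: fps_eq_iff ca_one ca_zero)
lemma smap_zero: "complex_alg sc \<Longrightarrow> smap sc 0 = 0"
  by (simp add: fps_eq_iff ca_zero)
lemma smap_const: "complex_alg sc \<Longrightarrow> smap sc (fps_const c) = fps_const (sc c)"
  by (simp add: fps_eq_iff ca_zero)
lemma smap_X: "complex_alg sc \<Longrightarrow> smap sc fps_X = fps_X"
  by (simp add: fps_eq_iff fps_X_def ca_zero ca_one)
lemma smap_power: "complex_alg sc \<Longrightarrow> smap sc (z ^ k) = smap sc z ^ k"
  by (induction k) (simp_all add: smap_one smap_mult)
lemma smap_cent: "complex_alg sc \<Longrightarrow> cent (smap sc z)"
  by (rule fps_cent) (simp add: ca_cent)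
lemma smap_id: "smap (\<lambda>x. x) z = z" by (simp add: fps_eq_iff)

lemma ca_lift: assumes "complex_alg sc" shows "complex_alg (\<lambda>z. fps_const (sc z))"
  unfolding complex_alg_def
proof (intro conjI allI)
  show "fps_const (sc 1) = 1" using assms by (simp add: ca_one)
  fix x y
  show "fps_const (sc (x + y)) = fps_const (sc x) + fps_const (sc y)" using assms by (simp add: ca_add)
  show "fps_const (sc (x * y)) = fps_const (sc x) * fps_const (sc y)" using assms by (simp add: ca_mult)
next
  fix x and a :: "'a fps"
  show "fps_const (sc x) * a = a * fps_const (sc x)"
    using assms by (simp add: fps_eq_iff ca_comm)
qed

lemma Ev_smap: assumes sc: "complex_alg sc" shows "Ev sc G (smap sc w) = smap sc (Ev (\<lambda>x. x) G w)"
  by (simp add: fps_eq_iff Ev_nth ca_sum[OF sc] ca_mult[OF sc])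

lemma Ev_X_id: assumes "complex_alg sc" shows "Ev sc fps_X f = f"
proof -
  have "Ev sc fps_X f $ N = f $ N" for N
  proof -
    have "Ev sc fps_X f $ N = (\<Sum>r\<le>N. if r = N then f $ r else 0)"
      unfolding Ev_nth fps_X_power_nth by (intro sum.cong refl) (simp add: ca_one[OF assms] ca_zero[OF assms])
    then show ?thesis by (simp add: sum.delta')
  qed
  then show ?thesis by (simp add: fps_eq_iff)
qed

lemma fps_const_sum: "fps_const (sum f A) = (\<Sum>x\<in>A. fps_const (f x :: 'b::comm_monoid_add))"
  by (induction A rule: infinite_finite_induct) (simp_all del: fps_const_add add: fps_const_add[symmetric])

definition U :: "'b::ring_1 fps \<Rightarrow> 'b fps fps" where "U f = Abs_fps (\<lambda>p. fps_const (f $ p))"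
abbreviation V :: "'b::ring_1 fps \<Rightarrow> 'b fps fps" where "V h \<equiv> fps_const h"

lemma U_nth[simp]: "U f $ p = fps_const (f $ p)" by (simp add: U_def)

lemma UV_nth: "(U f * V h) $ p $ q = f $ p * h $ q"
  by simp
lemma VU_nth: "(V h * U f) $ p $ q = h $ q * f $ p"
  by simp

definition S :: "(complex \<Rightarrow> 'b::ring_1) \<Rightarrow> complex fps \<Rightarrow> 'b fps fps \<Rightarrow> 'b fps fps" where
  "S sc G F = Abs_fps (\<lambda>p. Ev sc G (F $ p))"

lemma S_nth[simp]: "S sc G F $ p = Ev sc G (F $ p)" by (simp add: S_def)

lemma S_add: "S sc G (F + H) = S sc G F + S sc G H" by (simp add: fps_eq_iff Ev_add)
lemma S_diff: "S sc G (F - H) = S sc G F - S sc G H" by (simp add: fps_eq_iff Ev_diff)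
lemma S_mult: assumes "complex_alg sc" "G $ 0 = 0" shows "S sc G (F * H) = S sc G F * S sc G H"
  by (simp add: fps_eq_iff fps_mult_nth Ev_sum Ev_mult[OF assms])
lemma S_U: assumes "complex_alg sc" shows "S sc G (U f) = U f"
  by (simp add: fps_eq_iff Ev_const[OF assms])
lemma S_V: "S sc G (V h) = V (Ev sc G h)"
  by (simp add: fps_eq_iff fps_const_def Ev_zero)
lemma S_X: assumes "complex_alg sc" shows "S sc G fps_X = fps_X"
  by (simp add: fps_eq_iff fps_X_def Ev_zero Ev_one[OF assms])

definition S' :: "(complex \<Rightarrow> 'b::ring_1) \<Rightarrow> complex fps \<Rightarrow> 'b fps fps \<Rightarrow> 'b fps fps" where
  "S' sc G F = Ev (\<lambda>z. fps_const (sc z)) G F"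

lemma S'_add: "S' sc G (F + H) = S' sc G F + S' sc G H" by (simp add: S'_def Ev_add)
lemma S'_diff: "S' sc G (F - H) = S' sc G F - S' sc G H" by (simp add: S'_def Ev_diff)
lemma S'_mult: assumes "complex_alg sc" "G $ 0 = 0" shows "S' sc G (F * H) = S' sc G F * S' sc G H"
  unfolding S'_def by (rule Ev_mult[OF ca_lift[OF assms(1)] assms(2)])
lemma S'_V: assumes "complex_alg sc" shows "S' sc G (V h) = V h"
  unfolding S'_def by (rule Ev_const[OF ca_lift[OF assms]])
lemma S'_U: "S' sc G (U f) = U (Ev sc G f)"
  by (simp add: fps_eq_iff S'_def Ev_nth fps_const_sum[symmetric])

definition Diag :: "'b::ring_1 fps fps \<Rightarrow> 'b fps" where
  "Diag F = Abs_fps (\<lambda>N. \<Sum>p\<le>N. F $ p $ (N - p))"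

lemma Diag_nth: "Diag F $ N = (\<Sum>p\<le>N. F $ p $ (N - p))" by (simp add: Diag_def)
lemma Diag_add: "Diag (F + H) = Diag F + Diag H" by (simp add: fps_eq_iff Diag_nth sum.distrib)
lemma Diag_diff: "Diag (F - H) = Diag F - Diag H" by (simp add: fps_eq_iff Diag_nth sum_subtractf)
lemma Diag_U: "Diag (U f) = f"
proof -
  have "Diag (U f) $ N = f $ N" for N
  proof -
    have "Diag (U f) $ N = (\<Sum>p\<le>N. if p = N then f $ p else 0)"
      unfolding Diag_nth by (intro sum.cong refl) auto
    then show ?thesis by (simp add: sum.delta')
  qed
  then show ?thesis by (simp add: fps_eq_iff)
qed
lemma Diag_V: "Diag (V h) = h"
proof -
  have "Diag (V h) $ N = h $ N" for N
  proof -
    have "Diag (V h) $ N = (\<Sum>p\<le>N. if p = 0 then h $ N else 0)"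
      unfolding Diag_nth by (intro sum.cong refl) (auto simp: fps_const_def)
    then show ?thesis by simp
  qed
  then show ?thesis by (simp add: fps_eq_iff)
qed


lemma tri: "(\<Sum>p\<le>N. \<Sum>i\<le>p. g i (p - i)) = (\<Sum>i\<le>(N::nat). \<Sum>k\<le>N - i. g i k)"
proof -
  have "(\<Sum>p\<le>N. \<Sum>i\<le>p. g i (p - i)) = (\<Sum>(i, k)\<in>{(i, k). i + k \<le> N}. g i k)"
    by (rule sum.triangle_reindex_eq[symmetric])
  also have "{(i, k). i + k \<le> N} = (SIGMA i:{..N}. {..N - i})" by auto
  also have "(\<Sum>(i, k)\<in>(SIGMA i:{..N}. {..N - i}). g i k) = (\<Sum>i\<le>N. \<Sum>k\<le>N - i. g i k)"
    by (rule sum.Sigma[symmetric]) auto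
  finally show ?thesis .
qed

lemma tri_swap: "(\<Sum>a\<le>n. \<Sum>b\<le>n - a. f a b) = (\<Sum>b\<le>(n::nat). \<Sum>a\<le>n - b. f a b)"
proof -
  have "(\<Sum>a\<le>n. \<Sum>b\<le>n - a. f a b) = (\<Sum>p\<le>n. \<Sum>a\<le>p. f a (p - a))" by (rule tri[symmetric])
  also have "\<dots> = (\<Sum>p\<le>n. \<Sum>b\<le>p. f (p - b) b)"
  proof (rule sum.cong[OF refl])
    fix p
    show "(\<Sum>a\<le>p. f a (p - a)) = (\<Sum>b\<le>p. f (p - b) b)"
      by (rule sum.reindex_bij_witness[of _ "\<lambda>b. p - b" "\<lambda>a. p - a"]) auto
  qed
  also have "\<dots> = (\<Sum>b\<le>n. \<Sum>a\<le>n - b. f a b)" by (rule tri)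
  finally show ?thesis .
qed

lemma Diag_mult: "Diag (F * H) = Diag F * Diag (H :: 'b::ring_1 fps fps)"
proof -
  have "Diag (F * H) $ N = (Diag F * Diag H) $ N" for N
  proof -
    have "Diag (F * H) $ N = (\<Sum>p\<le>N. \<Sum>i\<le>p. \<Sum>j\<le>N - p. F $ i $ j * H $ (p - i) $ (N - p - j))"
      unfolding Diag_nth fps_mult_nth atLeast0AtMost fps_sum_nth by simp
    also have "\<dots> = (\<Sum>p\<le>N. \<Sum>i\<le>p. (\<lambda>i k. \<Sum>j\<le>N - (i + k). F $ i $ j * H $ k $ (N - (i + k) - j)) i (p - i))"
      by (intro sum.cong refl) auto
    also have "\<dots> = (\<Sum>i\<le>N. \<Sum>k\<le>N - i. \<Sum>j\<le>N - (i + k). F $ i $ j * H $ k $ (N - (i + k) - j))"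
      by (rule tri)
    also have "\<dots> = (\<Sum>i\<le>N. \<Sum>k\<le>N - i. \<Sum>j\<le>N - i - k. F $ i $ j * H $ k $ (N - i - j - k))"
      by (intro sum.cong refl) (simp_all add: add_ac)
    also have "\<dots> = (\<Sum>i\<le>N. \<Sum>j\<le>N - i. \<Sum>k\<le>N - i - j. F $ i $ j * H $ k $ (N - i - j - k))"
    proof (rule sum.cong[OF refl])
      fix i
      show "(\<Sum>k\<le>N - i. \<Sum>j\<le>N - i - k. F $ i $ j * H $ k $ (N - i - j - k)) = (\<Sum>j\<le>N - i. \<Sum>k\<le>N - i - j. F $ i $ j * H $ k $ (N - i - j - k))"
        using tri_swap[where f="\<lambda>k j. F $ i $ j * H $ k $ (N - i - j - k)" and n="N - i"] by simp
    qed
    also have "\<dots> = (\<Sum>i\<le>N. \<Sum>j\<le>N - i. F $ i $ j * (\<Sum>k\<le>N - (i + j). H $ k $ (N - (i + j) - k)))"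
      by (intro sum.cong refl) (simp_all add: sum_distrib_left add_ac)
    also have "\<dots> = (\<Sum>M\<le>N. \<Sum>i\<le>M. (\<lambda>i j. F $ i $ j * (\<Sum>k\<le>N - (i + j). H $ k $ (N - (i + j) - k))) i (M - i))"
      by (rule tri[symmetric])
    also have "\<dots> = (\<Sum>M\<le>N. \<Sum>i\<le>M. F $ i $ (M - i) * (\<Sum>k\<le>N - M. H $ k $ (N - M - k)))"
      by (intro sum.cong refl) auto
    also have "\<dots> = (Diag F * Diag H) $ N"
      unfolding fps_mult_nth Diag_nth atLeast0AtMost by (simp add: sum_distrib_right)
    finally show ?thesis .
  qed
  then show ?thesis by (simp add: fps_eq_iff)
qed

definition smap2 :: "(complex \<Rightarrow> 'b::ring_1) \<Rightarrow> complex fps fps \<Rightarrow> 'b fps fps" where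
  "smap2 sc Z = Abs_fps (\<lambda>p. smap sc (Z $ p))"

lemma smap2_nth[simp]: "smap2 sc Z $ p = smap sc (Z $ p)" by (simp add: smap2_def)

lemma smap_sum: "complex_alg sc \<Longrightarrow> smap sc (sum f A) = (\<Sum>x\<in>A. smap sc (f x))"
  by (induction A rule: infinite_finite_induct) (simp_all add: smap_zero smap_add)

lemma smap2_add: "complex_alg sc \<Longrightarrow> smap2 sc (Z + W) = smap2 sc Z + smap2 sc W"
  by (simp add: fps_eq_iff smap_add)
lemma smap2_diff: "complex_alg sc \<Longrightarrow> smap2 sc (Z - W) = smap2 sc Z - smap2 sc W"
  by (simp add: fps_eq_iff smap_diff)
lemma smap2_mult: "complex_alg sc \<Longrightarrow> smap2 sc (Z * W) = smap2 sc Z * smap2 sc W"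
proof -
  assume sc: "complex_alg sc"
  have "smap sc (\<Sum>i = 0..n. Z $ i * W $ (n - i)) = (\<Sum>i = 0..n. smap sc (Z $ i) * smap sc (W $ (n - i)))" for n
    by (simp add: smap_sum[OF sc] smap_mult[OF sc])
  then show ?thesis by (simp add: fps_eq_iff fps_mult_nth)
qed
lemma smap2_one: "complex_alg sc \<Longrightarrow> smap2 sc 1 = 1"
  using smap_one[of sc] smap_zero[of sc] by (simp add: fps_eq_iff)
lemma smap2_X: "complex_alg sc \<Longrightarrow> smap2 sc fps_X = fps_X"
  using smap_one[of sc] smap_zero[of sc] by (simp add: fps_eq_iff fps_X_def)
lemma smap2_V: "complex_alg sc \<Longrightarrow> smap2 sc (V h) = V (smap sc h)"
  using smap_zero[of sc] by (simp add: fps_eq_iff fps_const_def)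
lemma smap2_cent: "complex_alg sc \<Longrightarrow> cent (smap2 sc Z)"
  by (rule fps_cent) (simp add: smap_cent)
lemma smap2_power: "complex_alg sc \<Longrightarrow> smap2 sc (Z ^ k) = smap2 sc Z ^ k"
  by (induction k) (simp_all add: smap2_one smap2_mult)

lemma S_smap2: assumes sc: "complex_alg sc" shows "S sc G (smap2 sc Z) = smap2 sc (S (\<lambda>x. x) G Z)"
  by (simp add: fps_eq_iff Ev_smap[OF sc])
lemma S'_smap2: assumes sc: "complex_alg sc" shows "S' sc G (smap2 sc Z) = smap2 sc (S' (\<lambda>x. x) G Z)"
proof -
  have "S' sc G (smap2 sc Z) $ N = smap2 sc (S' (\<lambda>x. x) G Z) $ N" for N
  proof -
    have "S' sc G (smap2 sc Z) $ N = (\<Sum>r\<le>N. smap sc (Z $ r) * fps_const (sc ((G ^ r) $ N)))"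
      by (simp add: S'_def Ev_nth)
    also have "\<dots> = (\<Sum>r\<le>N. smap sc (Z $ r * fps_const ((G ^ r) $ N)))"
      by (simp add: smap_mult[OF sc] smap_const[OF sc])
    also have "\<dots> = smap sc (\<Sum>r\<le>N. Z $ r * fps_const ((G ^ r) $ N))"
      by (simp add: smap_sum[OF sc])
    finally show ?thesis by (simp add: S'_def Ev_nth)
  qed
  then show ?thesis by (simp add: fps_eq_iff)
qed
lemma Diag_smap2: assumes sc: "complex_alg sc" shows "Diag (smap2 sc Z) = smap sc (Diag Z)"
  by (simp add: fps_eq_iff Diag_nth ca_sum[OF sc])

lemma U_X: "U fps_X = (fps_X :: 'b::ring_1 fps fps)"
  by (simp add: fps_eq_iff fps_X_def)


lemma X_shift: fixes f :: "'b::comm_ring_1 fps" assumes "f $ 0 = 0" shows "fps_X * fps_shift 1 f = f"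
proof (rule fps_ext)
  fix n show "(fps_X * fps_shift 1 f) $ n = f $ n" using assms by (cases n) simp_all
qed

lemma inv_r: "(a::'b::field fps) $ 0 \<noteq> 0 \<Longrightarrow> a * inverse a = 1"
  using inverse_mult_eq_1[of a] by (simp add: mult.commute)

definition Aq :: "complex \<Rightarrow> complex \<Rightarrow> complex fps" where
  "Aq \<beta> c = 1 + fps_const c * fps_X + fps_const \<beta> * fps_X ^ 2"

definition Kq :: "complex \<Rightarrow> complex \<Rightarrow> complex fps \<Rightarrow> bool" where
  "Kq \<beta> c G \<longleftrightarrow> G * Aq \<beta> c = fps_X + fps_const \<beta> * fps_X * G ^ 2"

lemma Kq_X: "Kq \<beta> 0 fps_X"
  by (simp add: Kq_def Aq_def algebra_simps power2_eq_square)

lemma Kq_0: assumes "Kq \<beta> c G" shows "G $ 0 = 0"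
proof -
  have "(G * Aq \<beta> c) $ 0 = (fps_X + fps_const \<beta> * fps_X * G ^ 2) $ 0"
    using assms by (simp add: Kq_def)
  then show ?thesis by (simp add: Aq_def)
qed

lemma Kq_1: assumes "Kq \<beta> c G" shows "G $ 1 = 1"
proof -
  have G0: "G $ 0 = 0" by (rule Kq_0[OF assms])
  have "(G * Aq \<beta> c) $ 1 = (fps_X + fps_const \<beta> * fps_X * G ^ 2) $ 1"
    using assms by (simp add: Kq_def)
  moreover have "(G * Aq \<beta> c) $ 1 = G $ 1"
    using G0 by (simp add: Aq_def fps_mult_nth_1 algebra_simps)
  moreover have "(fps_X + fps_const \<beta> * fps_X * G ^ 2) $ 1 = 1"
    using G0 by (simp add: mult.assoc power2_eq_square)
  ultimately show ?thesis by simp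
qed

lemma Kq_exists: assumes b: "\<beta> \<noteq> 0" shows "\<exists>G. Kq \<beta> c G"
proof -
  define A where "A = Aq \<beta> c"
  define B where "B = fps_const \<beta>"
  define D where "D = A ^ 2 - 4 * B * fps_X ^ 2"
  have D0: "D $ 0 = 1" by (simp add: D_def A_def B_def Aq_def power2_eq_square)
  define Sq where "Sq = fps_radical (\<lambda>_ _. 1) 2 D"
  have Sq2: "Sq ^ 2 = D"
    using power_radical[of D "\<lambda>_ _. 1" 1] D0 by (simp add: Sq_def numeral_2_eq_2)
  have Sq0: "Sq $ 0 = 1" by (simp add: Sq_def D0)
  define N where "N = A - Sq"
  have N0: "N $ 0 = 0" using Sq0 by (simp add: N_def A_def Aq_def)
  define Ci where "Ci = fps_const (inverse (2 * \<beta>))"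
  have hinv: "2 * B * Ci = 1"
    using b by (simp add: B_def Ci_def numeral_fps_const)
  define G where "G = Ci * fps_shift 1 N"
  have XG: "2 * B * fps_X * G = N"
  proof -
    have "2 * B * fps_X * G = (2 * B * Ci) * (fps_X * fps_shift 1 N)"
      by (simp only: G_def mult_ac)
    also have "\<dots> = N" by (simp only: hinv X_shift[OF N0] mult_1_left)
    finally show ?thesis .
  qed
  have "(4 * B * fps_X) * (G * A - fps_X - B * fps_X * G ^ 2) = 0"
    using XG Sq2 unfolding D_def N_def by algebra
  moreover have "4 * B * fps_X \<noteq> 0"
  proof
    assume "4 * B * fps_X = 0"
    then have "(4 * B * fps_X) $ 1 = 0" by simp
    then show False using b by (simp add: B_def numeral_fps_const)
  qed
  ultimately have "G * A - fps_X - B * fps_X * G ^ 2 = 0" by simp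
  then have "Kq \<beta> c G" by (simp add: Kq_def A_def B_def diff_eq_eq add_ac)
  then show ?thesis ..
qed

definition phi_eq :: "complex \<Rightarrow> complex \<Rightarrow> complex fps \<Rightarrow> bool" where
  "phi_eq \<beta> c p \<longleftrightarrow> p + fps_const \<beta> * fps_X * inverse (1 + fps_X * p) = fps_const \<beta> * fps_X + fps_const c"

lemma phi_eq_exists: assumes b: "\<beta> \<noteq> 0" shows "\<exists>p. phi_eq \<beta> c p"
proof -
  obtain G where K: "Kq \<beta> c G" using Kq_exists[OF b] by blast
  define h where "h = fps_shift 1 G"
  have Xh: "fps_X * h = G" unfolding h_def by (rule X_shift[OF Kq_0[OF K]])
  have h0: "h $ 0 = 1" using Kq_1[OF K] by (simp add: h_def)
  define ih where "ih = inverse h"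
  have hih: "h * ih = 1" unfolding ih_def by (rule inv_r) (simp add: h0)
  have ih0: "(ih - 1) $ 0 = 0" using h0 by (simp add: ih_def)
  define p where "p = fps_shift 1 (ih - 1)"
  have Xp: "fps_X * p = ih - 1" unfolding p_def by (rule X_shift[OF ih0])
  have inv: "inverse (1 + fps_X * p) = h"
    using h0 by (simp add: Xp ih_def fps_inverse_idempotent)
  let ?B = "fps_const \<beta>" and ?C = "fps_const c"
  have "fps_X * h * fps_X * (p + ?B * G - ?B * fps_X - ?C) = 0"
    using K Xp hih Xh unfolding Kq_def Aq_def by algebra
  moreover have "fps_X * h * fps_X \<noteq> (0 :: complex fps)"
    using h0 by auto
  ultimately have e: "p + ?B * G - ?B * fps_X - ?C = 0" by simp
  have "phi_eq \<beta> c p"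
    unfolding phi_eq_def inv using e Xh by algebra
  then show ?thesis ..
qed

lemma phi_eq_unique: assumes "phi_eq \<beta> c p" "phi_eq \<beta> c q" shows "p = q"
proof -
  define a where "a = 1 + fps_X * p"
  define b where "b = 1 + fps_X * q"
  have a0: "a $ 0 \<noteq> 0" "b $ 0 \<noteq> 0" by (simp_all add: a_def b_def)
  define ia where "ia = inverse a"
  define ib where "ib = inverse b"
  have aia: "a * ia = 1" "b * ib = 1" using a0 inv_r by (simp_all add: ia_def ib_def)
  let ?B = "fps_const \<beta>" and ?C = "fps_const c"
  have e: "p + ?B * fps_X * ia = ?B * fps_X + ?C" "q + ?B * fps_X * ib = ?B * fps_X + ?C"
    using assms by (simp_all add: phi_eq_def ia_def ib_def a_def b_def)
  have "(p - q) * (a * b - ?B * fps_X ^ 2) = 0"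
    using e aia unfolding a_def b_def by algebra
  moreover have "a * b - ?B * fps_X ^ 2 \<noteq> 0"
  proof
    assume "a * b - ?B * fps_X ^ 2 = 0"
    then have "(a * b - ?B * fps_X ^ 2) $ 0 = 0" by simp
    then show False by (simp add: a_def b_def power2_eq_square)
  qed
  ultimately show ?thesis by simp
qed

lemma phi_tail_eq: assumes "\<beta> \<noteq> 0" shows "phi_eq \<beta> c (phi_tail \<beta> c)"
proof -
  have "\<exists>!p. phi_eq \<beta> c p" using phi_eq_exists[OF assms] phi_eq_unique by blast
  then have "phi_eq \<beta> c (THE p. phi_eq \<beta> c p)" by (rule theI')
  then show ?thesis by (simp add: phi_tail_def phi_eq_def)
qed

lemma phi_inv_K: assumes "\<beta> \<noteq> 0" shows "Kq \<beta> c (phi_inv \<beta> c)"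
proof -
  define P where "P = phi_tail \<beta> c"
  define a where "a = 1 + fps_X * P"
  define ia where "ia = inverse a"
  have aia: "a * ia = 1" unfolding ia_def by (rule inv_r) (simp add: a_def)
  have e: "P + fps_const \<beta> * fps_X * ia = fps_const \<beta> * fps_X + fps_const c"
    using phi_tail_eq[OF assms, of c] by (simp add: phi_eq_def P_def ia_def a_def)
  have G: "phi_inv \<beta> c = fps_X * ia" by (simp add: phi_inv_def ia_def a_def P_def)
  show ?thesis
    unfolding Kq_def Aq_def G using e aia unfolding a_def by algebra
qed


abbreviation Cst :: "'b::ring_1 \<Rightarrow> 'b fps fps" where "Cst z \<equiv> fps_const (fps_const z)"
abbreviation Y2 :: "'b::ring_1 fps fps" where "Y2 \<equiv> fps_const fps_X"

definition Ec :: "complex \<Rightarrow> complex \<Rightarrow> complex fps fps" where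
  "Ec \<beta> c = Y2 - fps_X - Cst c * fps_X * Y2 - Cst \<beta> * fps_X * Y2 ^ 2 + Cst \<beta> * fps_X ^ 2 * Y2"

lemma smap2_Cst: "complex_alg sc \<Longrightarrow> smap2 sc (Cst z) = Cst (sc z)"
  using smap2_V[of sc "fps_const z"] smap_const[of sc z] by simp
lemma smap2_Y: "complex_alg sc \<Longrightarrow> smap2 sc Y2 = Y2"
  using smap2_V[of sc fps_X] smap_X[of sc] by simp

lemma smap2_Ec: assumes sc: "complex_alg sc"
  shows "smap2 sc (Ec \<beta> c) = Y2 - fps_X - Cst (sc c) * fps_X * Y2 - Cst (sc \<beta>) * fps_X * Y2 ^ 2 + Cst (sc \<beta>) * fps_X ^ 2 * Y2"
  unfolding Ec_def
  by (simp add: smap2_add[OF sc] smap2_diff[OF sc] smap2_mult[OF sc] smap2_power[OF sc] smap2_Cst[OF sc] smap2_Y[OF sc] smap2_X[OF sc] del: fps_const_power)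

lemma cY: "(Y2 * F) $ p $ q = (if q = 0 then 0 else F $ p $ (q - 1))"
  by simp
lemma cK: "(Cst z * F) $ p $ q = z * F $ p $ q"
  by simp

lemma CL: assumes sc: "complex_alg sc"
  shows "(smap2 sc (Ec \<beta> c) * F) $ p $ q =
    (if 1 \<le> q then F $ p $ (q - 1) else 0) - (if 1 \<le> p then F $ (p - 1) $ q else 0)
    - sc c * (if 1 \<le> p \<and> 1 \<le> q then F $ (p - 1) $ (q - 1) else 0)
    - sc \<beta> * (if 1 \<le> p \<and> 2 \<le> q then F $ (p - 1) $ (q - 2) else 0)
    + sc \<beta> * (if 2 \<le> p \<and> 1 \<le> q then F $ (p - 2) $ (q - 1) else 0)"
proof -
  have e: "smap2 sc (Ec \<beta> c) * F = Y2 * F - fps_X * F - Cst (sc c) * (fps_X * (Y2 * F))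
      - Cst (sc \<beta>) * (fps_X * (Y2 * (Y2 * F))) + Cst (sc \<beta>) * (fps_X * (fps_X * (Y2 * F)))"
    unfolding smap2_Ec[OF sc] by (simp add: algebra_simps power2_eq_square del: fps_const_power fps_const_mult)
  show ?thesis unfolding e
    by (simp only: fps_add_nth fps_sub_nth cK fps_X_mult_nth cY) (auto simp: diff_diff_left numeral_2_eq_2)
qed

lemma dd_coeff: "(fps_X * (Y2 * F)) $ p $ q = (if 1 \<le> p \<and> 1 \<le> q then F $ (p - 1) $ (q - 1) else 0)"
  by simp

definition mk2 :: "(nat \<Rightarrow> nat \<Rightarrow> 'b::ring_1) \<Rightarrow> 'b fps fps" where
  "mk2 D = Abs_fps (\<lambda>p. Abs_fps (\<lambda>q. D p q))"

lemma mk2_nth[simp]: "mk2 D $ p $ q = D p q" by (simp add: mk2_def)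

lemma zext_shift: "zext D (int p - int i) (int q - int j) = (if p < i \<or> q < j then 0 else D (p - i) (q - j))"
  by (simp add: zext_def nat_diff_distrib)

lemma TL: assumes sc: "complex_alg sc"
  shows "(\<forall>r s. factor_coeff sc \<beta> D r s = zext D' r s) \<longleftrightarrow>
    smap2 sc (Ec \<beta> 0) * mk2 D = fps_X * (Y2 * mk2 D')"
proof -
  have key: "(smap2 sc (Ec \<beta> 0) * mk2 D) $ p $ q = factor_coeff sc \<beta> D (int p - 1) (int q - 1)"
    and key2: "(fps_X * (Y2 * mk2 D')) $ p $ q = zext D' (int p - 1) (int q - 1)" for p q
  proof -
    have z: "zext D (int p - 1 + 1) (int q - 1) = (if q < 1 then 0 else D p (q - 1))"
      "zext D (int p - 1 - 1) (int q - 1) = (if p < 2 \<or> q < 1 then 0 else D (p - 2) (q - 1))"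
      "zext D (int p - 1) (int q - 1 + 1) = (if p < 1 then 0 else D (p - 1) q)"
      "zext D (int p - 1) (int q - 1 - 1) = (if p < 1 \<or> q < 2 then 0 else D (p - 1) (q - 2))"
      using zext_shift[of D p 0 q 1] zext_shift[of D p 2 q 1] zext_shift[of D p 1 q 0] zext_shift[of D p 1 q 2]
      by (simp_all add: algebra_simps)
    show "(smap2 sc (Ec \<beta> 0) * mk2 D) $ p $ q = factor_coeff sc \<beta> D (int p - 1) (int q - 1)"
      unfolding CL[OF sc] factor_coeff_def z using ca_zero[OF sc] by (auto simp: algebra_simps)
    show "(fps_X * (Y2 * mk2 D')) $ p $ q = zext D' (int p - 1) (int q - 1)"
      using zext_shift[of D' p 1 q 1] by simp
  qed
  show ?thesis
  proof
    assume h: "\<forall>r s. factor_coeff sc \<beta> D r s = zext D' r s"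
    show "smap2 sc (Ec \<beta> 0) * mk2 D = fps_X * (Y2 * mk2 D')"
      by (intro fps_ext) (simp only: key key2 h)
  next
    assume h: "smap2 sc (Ec \<beta> 0) * mk2 D = fps_X * (Y2 * mk2 D')"
    show "\<forall>r s. factor_coeff sc \<beta> D r s = zext D' r s"
    proof (intro allI)
      fix r s :: int
      show "factor_coeff sc \<beta> D r s = zext D' r s"
      proof (cases "r \<ge> -1 \<and> s \<ge> -1")
        case True
        define p where "p = nat (r + 1)"
        define q where "q = nat (s + 1)"
        have rs: "r = int p - 1" "s = int q - 1" using True by (simp_all add: p_def q_def)
        show ?thesis using key[of p q] key2[of p q] h unfolding rs by simp
      next
        case False
        then show ?thesis using ca_zero[OF sc] by (auto simp: factor_coeff_def zext_def)
      qed
    qed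
  qed
qed


lemma Tser_nth: "Tser t i j $ p = Tc t p i j" by (simp add: Tser_def)

lemma OYF: assumes sc: "complex_alg sc" and OY: "OY_rel sc \<beta> n t"
  and ijkl: "i \<in> {1..n}" "j \<in> {1..n}" "k \<in> {1..n}" "l \<in> {1..n}"
  shows "smap2 sc (Ec \<beta> 0) * (U (Tser t i j) * V (Tser t k l) - V (Tser t k l) * U (Tser t i j))
    = fps_X * (Y2 * (U (Tser t k j) * V (Tser t i l) - V (Tser t k j) * U (Tser t i l)))"
proof -
  have h: "\<forall>r s. factor_coeff sc \<beta> (\<lambda>p q. commutator (Tc t p i j) (Tc t q k l)) r s
     = zext (\<lambda>p q. Tc t p k j * Tc t q i l - Tc t q k j * Tc t p i l) r s"
    using OY ijkl unfolding OY_rel_def by blast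
  have m1: "mk2 (\<lambda>p q. commutator (Tc t p i j) (Tc t q k l)) = U (Tser t i j) * V (Tser t k l) - V (Tser t k l) * U (Tser t i j)"
    by (intro fps_ext) (simp add: commutator_def Tser_nth)
  have m2: "mk2 (\<lambda>p q. Tc t p k j * Tc t q i l - Tc t q k j * Tc t p i l) = U (Tser t k j) * V (Tser t i l) - V (Tser t k j) * U (Tser t i l)"
    by (intro fps_ext) (simp add: Tser_nth)
  show ?thesis using h unfolding TL[OF sc] m1 m2 .
qed

lemma canX1: "fps_X * (w :: 'b::ring_1 fps) = 0 \<Longrightarrow> w = 0"
proof -
  assume h: "fps_X * w = 0"
  have "w $ n = 0" for n using arg_cong[OF h, of "\<lambda>f. f $ Suc n"] by simp
  then show ?thesis by (simp add: fps_eq_iff)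
qed

lemma canY: "Y2 * (W :: 'b::ring_1 fps fps) = 0 \<Longrightarrow> W = 0"
proof -
  assume h: "Y2 * W = 0"
  have "W $ p = 0" for p
  proof -
    have "fps_X * W $ p = 0" using arg_cong[OF h, of "\<lambda>f. f $ p"] by simp
    then show ?thesis by (rule canX1)
  qed
  then show ?thesis by (simp add: fps_eq_iff)
qed

lemma canG: assumes sc: "complex_alg sc" and G0: "G $ 0 = 0" and G1: "G $ 1 = 1"
  and h: "smap sc G * z = 0" shows "z = 0"
proof -
  define g where "g = fps_shift 1 G"
  have Xg: "fps_X * g = G" unfolding g_def by (rule X_shift[OF G0])
  have g0: "g $ 0 = 1" using G1 by (simp add: g_def)
  have gi: "inverse g * g = 1" using g0 by (simp add: inverse_mult_eq_1)
  have "fps_X * (smap sc g * z) = 0"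
    using h unfolding Xg[symmetric] smap_mult[OF sc] smap_X[OF sc] by (simp add: mult.assoc)
  then have "smap sc g * z = 0" by (rule canX1)
  then have "smap sc (inverse g) * (smap sc g * z) = 0" by simp
  then show ?thesis by (simp add: mult.assoc[symmetric] smap_mult[OF sc, symmetric] gi smap_one[OF sc])
qed

lemma canVG: assumes sc: "complex_alg sc" and G0: "G $ 0 = 0" and G1: "G $ 1 = 1"
  and h: "smap2 sc (V G) * Z = 0" shows "Z = 0"
proof -
  define g where "g = fps_shift 1 G"
  have Xg: "fps_X * g = G" unfolding g_def by (rule X_shift[OF G0])
  have g0: "g $ 0 = 1" using G1 by (simp add: g_def)
  have gi: "inverse g * g = 1" using g0 by (simp add: inverse_mult_eq_1)
  have e: "smap2 sc (V G) = Y2 * smap2 sc (V g)"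
  proof -
    have "V (fps_X * g) = Y2 * V g" by simp
    then show ?thesis unfolding Xg[symmetric] by (simp only: smap2_mult[OF sc] smap2_Y[OF sc])
  qed
  have "Y2 * (smap2 sc (V g) * Z) = 0" using h unfolding e by (simp add: mult.assoc)
  then have "smap2 sc (V g) * Z = 0" by (rule canY)
  then have "smap2 sc (V (inverse g)) * (smap2 sc (V g) * Z) = 0" by simp
  then have "smap2 sc (V (inverse g) * V g) * Z = 0" by (simp only: mult.assoc[symmetric] smap2_mult[OF sc, symmetric])
  moreover have "V (inverse g) * V g = 1" using gi by simp
  ultimately show ?thesis by (simp add: smap2_one[OF sc])
qed

lemma canE: assumes sc: "complex_alg sc" and h: "smap2 sc (Ec \<beta> c) * F = 0" shows "F = 0"
proof -
  have z: "(smap2 sc (Ec \<beta> c) * F) $ p $ q = 0" for p q using h by simp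
  have "\<forall>q. F $ p $ q = 0" for p
  proof (induction p rule: less_induct)
    case (less p)
    show ?case
    proof
      fix q
      have "(smap2 sc (Ec \<beta> c) * F) $ p $ Suc q = 0" by (rule z)
      then show "F $ p $ q = 0" unfolding CL[OF sc] using less by (auto split: if_splits)
    qed
  qed
  then show ?thesis by (simp add: fps_eq_iff)
qed

lemma S_one: "complex_alg sc \<Longrightarrow> S sc G 1 = 1"
  by (simp add: fps_eq_iff Ev_one Ev_zero)
lemma S_power: "complex_alg sc \<Longrightarrow> G $ 0 = 0 \<Longrightarrow> S sc G (F ^ k) = S sc G F ^ k"
  by (induction k) (simp_all add: S_one S_mult)
lemma S_Cst: "complex_alg sc \<Longrightarrow> S sc G (Cst z) = Cst z"
  by (simp add: S_V Ev_const)
lemma S_Y: "complex_alg sc \<Longrightarrow> G $ 0 = 0 \<Longrightarrow> S sc G Y2 = V (smap sc G)"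
  by (simp add: S_V Ev_X)

lemma S_id_Ec: assumes G0: "G $ 0 = 0"
  shows "S (\<lambda>x. x) G (Ec \<beta> 0) = V G - fps_X - Cst \<beta> * fps_X * (V G) ^ 2 + Cst \<beta> * fps_X ^ 2 * V G"
  unfolding Ec_def
  by (simp add: S_add S_diff S_mult[OF ca_id G0] S_power[OF ca_id G0] S_Cst[OF ca_id] S_Y[OF ca_id G0]
      S_X[OF ca_id] smap_id del: fps_const_power fps_const_mult)

lemma V_K: assumes K: "Kq \<beta> c G"
  shows "V G * (1 + Cst c * Y2 + Cst \<beta> * Y2 ^ 2) = Y2 + Cst \<beta> * Y2 * (V G) ^ 2"
proof -
  have "fps_const (G * Aq \<beta> c) = fps_const (fps_X + fps_const \<beta> * fps_X * G ^ 2)"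
    using K unfolding Kq_def by simp
  then show ?thesis
    by (simp only: Aq_def fps_const_add[symmetric] fps_const_mult[symmetric] fps_const_power[symmetric] fps_const_1_eq_1)
qed

lemma CI1: assumes K: "Kq \<beta> c G"
  shows "Y2 * (V G - fps_X - Cst \<beta> * fps_X * (V G) ^ 2 + Cst \<beta> * fps_X ^ 2 * V G) = V G * Ec \<beta> c"
  using V_K[OF K] unfolding Ec_def by algebra

lemma RelS: assumes sc: "complex_alg sc" and OY: "OY_rel sc \<beta> n t" and K: "Kq \<beta> c G"
  and ijkl: "i \<in> {1..n}" "j \<in> {1..n}" "k \<in> {1..n}" "l \<in> {1..n}"
  shows "smap2 sc (Ec \<beta> c) * (U (Tser t i j) * V (Ev sc G (Tser t k l)) - V (Ev sc G (Tser t k l)) * U (Tser t i j))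
    = fps_X * (Y2 * (U (Tser t k j) * V (Ev sc G (Tser t i l)) - V (Ev sc G (Tser t k j)) * U (Tser t i l)))"
proof -
  have G0: "G $ 0 = 0" by (rule Kq_0[OF K])
  have G1: "G $ 1 = 1" by (rule Kq_1[OF K])
  let ?C = "U (Tser t i j) * V (Tser t k l) - V (Tser t k l) * U (Tser t i j)"
  let ?R = "U (Tser t k j) * V (Tser t i l) - V (Tser t k j) * U (Tser t i l)"
  let ?SC = "U (Tser t i j) * V (Ev sc G (Tser t k l)) - V (Ev sc G (Tser t k l)) * U (Tser t i j)"
  let ?SR = "U (Tser t k j) * V (Ev sc G (Tser t i l)) - V (Ev sc G (Tser t k j)) * U (Tser t i l)"
  have XY: "fps_X * (Y2 * W) = smap2 sc (fps_X * Y2) * W" for W :: "'a fps fps"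
    by (simp add: smap2_mult[OF sc] smap2_X[OF sc] smap2_Y[OF sc] mult.assoc del: fps_const_mult)
  have O: "smap2 sc (Ec \<beta> 0) * ?C = smap2 sc (fps_X * Y2) * ?R"
    using OYF[OF sc OY ijkl] unfolding XY .
  have SC: "S sc G ?C = ?SC" and SR: "S sc G ?R = ?SR"
    by (simp_all add: S_diff S_mult[OF sc G0] S_U[OF sc] S_V)
  have "S sc G (smap2 sc (Ec \<beta> 0) * ?C) = S sc G (smap2 sc (fps_X * Y2) * ?R)" using O by simp
  then have O2: "smap2 sc (S (\<lambda>x. x) G (Ec \<beta> 0)) * ?SC = smap2 sc (S (\<lambda>x. x) G (fps_X * Y2)) * ?SR"
    by (simp only: S_mult[OF sc G0] S_smap2[OF sc] SC SR)
  have SXY: "S (\<lambda>x. x) G (fps_X * Y2) = fps_X * V G"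
    by (simp add: S_mult[OF ca_id G0] S_X[OF ca_id] S_Y[OF ca_id G0] smap_id del: fps_const_mult)
  have "smap2 sc Y2 * (smap2 sc (S (\<lambda>x. x) G (Ec \<beta> 0)) * ?SC) = smap2 sc Y2 * (smap2 sc (S (\<lambda>x. x) G (fps_X * Y2)) * ?SR)"
    using O2 by simp
  then have "smap2 sc (Y2 * S (\<lambda>x. x) G (Ec \<beta> 0)) * ?SC = smap2 sc (Y2 * (fps_X * V G)) * ?SR"
    by (simp only: mult.assoc[symmetric] smap2_mult[OF sc, symmetric] SXY)
  moreover have "Y2 * S (\<lambda>x. x) G (Ec \<beta> 0) = V G * Ec \<beta> c"
    unfolding S_id_Ec[OF G0] by (rule CI1[OF K])
  moreover have "Y2 * (fps_X * V G) = V G * (fps_X * Y2)" by (simp only: mult_ac)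
  ultimately have "smap2 sc (V G) * (smap2 sc (Ec \<beta> c) * ?SC - smap2 sc (fps_X * Y2) * ?SR) = 0"
    by (simp add: smap2_mult[OF sc] mult.assoc right_diff_distrib del: fps_const_mult)
  then have "smap2 sc (Ec \<beta> c) * ?SC - smap2 sc (fps_X * Y2) * ?SR = 0"
    by (rule canVG[OF sc G0 G1])
  then show ?thesis unfolding XY by simp
qed


lemma S'_one: "complex_alg sc \<Longrightarrow> S' sc G 1 = 1"
  unfolding S'_def by (rule Ev_one[OF ca_lift])
lemma S'_power: "complex_alg sc \<Longrightarrow> G $ 0 = 0 \<Longrightarrow> S' sc G (F ^ k) = S' sc G F ^ k"
  by (induction k) (simp_all add: S'_one S'_mult)
lemma S'_X: assumes sc: "complex_alg sc" and G0: "G $ 0 = 0" shows "S' sc G fps_X = U (smap sc G)"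
proof -
  have "S' sc G (U fps_X) = U (smap sc G)" by (simp only: S'_U Ev_X[OF sc G0])
  then show ?thesis by (simp only: U_X)
qed

lemma Diag_one: "Diag 1 = 1"
  using Diag_V[of 1] by simp
lemma Diag_power: "Diag (F ^ k) = Diag F ^ k"
  by (induction k) (simp_all add: Diag_one Diag_mult)


lemma S'_Cst: "complex_alg sc \<Longrightarrow> S' sc G (Cst z) = Cst z"
  by (rule S'_V)

lemma Delta_Ec: assumes G10: "G1 $ 0 = 0" and G20: "G2 $ 0 = 0"
  shows "Diag (S' (\<lambda>x. x) G1 (S (\<lambda>x. x) G2 (Ec \<beta> 0))) = G2 - G1 - fps_const \<beta> * G1 * G2 ^ 2 + fps_const \<beta> * G1 ^ 2 * G2"
  unfolding S_id_Ec[OF G20]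
  by (simp add: S'_add S'_diff S'_mult[OF ca_id G10] S'_power[OF ca_id G10] S'_Cst[OF ca_id] S'_V[OF ca_id]
      S'_X[OF ca_id G10] smap_id Diag_add Diag_diff Diag_mult Diag_power Diag_U Diag_V del: fps_const_power fps_const_mult)

lemma Delta_XY: assumes G10: "G1 $ 0 = 0" and G20: "G2 $ 0 = 0"
  shows "Diag (S' (\<lambda>x. x) G1 (S (\<lambda>x. x) G2 (fps_X * Y2))) = G1 * G2"
  by (simp add: S_mult[OF ca_id G20] S_X[OF ca_id] S_Y[OF ca_id G20] S'_mult[OF ca_id G10] S'_V[OF ca_id]
      S'_X[OF ca_id G10] smap_id Diag_mult Diag_U Diag_V del: fps_const_mult)

lemma CI2: assumes K1: "Kq \<beta> c G1" and K2: "Kq \<beta> (c - 1) G2"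
  shows "G2 - G1 - fps_const \<beta> * G1 * G2 ^ 2 + fps_const \<beta> * G1 ^ 2 * G2 = G1 * G2"
proof -
  have c1: "fps_const (c - 1) = fps_const c - 1" by (metis fps_const_1_eq_1 fps_const_sub)
  have "fps_X * ((G2 - G1 - fps_const \<beta> * G1 * G2 ^ 2 + fps_const \<beta> * G1 ^ 2 * G2) - G1 * G2) = 0"
    using K1 K2 c1 unfolding Kq_def Aq_def by algebra
  then show ?thesis by simp
qed

lemma RelD: assumes sc: "complex_alg sc" and OY: "OY_rel sc \<beta> n t" and K1: "Kq \<beta> c G1" and K2: "Kq \<beta> (c - 1) G2"
  and xyzw: "x \<in> {1..n}" "y \<in> {1..n}" "z \<in> {1..n}" "w \<in> {1..n}"
  shows "Ev sc G1 (Tser t x y) * Ev sc G2 (Tser t z w) - Ev sc G2 (Tser t z w) * Ev sc G1 (Tser t x y)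
    = Ev sc G1 (Tser t z y) * Ev sc G2 (Tser t x w) - Ev sc G2 (Tser t z y) * Ev sc G1 (Tser t x w)"
proof -
  have G10: "G1 $ 0 = 0" by (rule Kq_0[OF K1])
  have G11: "G1 $ 1 = 1" by (rule Kq_1[OF K1])
  have G20: "G2 $ 0 = 0" by (rule Kq_0[OF K2])
  have G21: "G2 $ 1 = 1" by (rule Kq_1[OF K2])
  define \<Delta> where "\<Delta> = (\<lambda>F :: 'a fps fps. Diag (S' sc G1 (S sc G2 F)))"
  have Dm: "\<Delta> (A * B) = \<Delta> A * \<Delta> B" for A B
    unfolding \<Delta>_def by (simp add: S_mult[OF sc G20] S'_mult[OF sc G10] Diag_mult)
  have Dd: "\<Delta> (A - B) = \<Delta> A - \<Delta> B" for A B
    unfolding \<Delta>_def by (simp add: S_diff S'_diff Diag_diff)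
  have DU: "\<Delta> (U f) = Ev sc G1 f" for f
    unfolding \<Delta>_def by (simp add: S_U[OF sc] S'_U Diag_U)
  have DV: "\<Delta> (V h) = Ev sc G2 h" for h
    unfolding \<Delta>_def by (simp add: S_V S'_V[OF sc] Diag_V)
  have Ds: "\<Delta> (smap2 sc Z) = smap sc (Diag (S' (\<lambda>x. x) G1 (S (\<lambda>x. x) G2 Z)))" for Z
    unfolding \<Delta>_def by (simp add: S_smap2[OF sc] S'_smap2[OF sc] Diag_smap2[OF sc])
  have XY: "fps_X * (Y2 * W) = smap2 sc (fps_X * Y2) * W" for W :: "'a fps fps"
    by (simp add: smap2_mult[OF sc] smap2_X[OF sc] smap2_Y[OF sc] mult.assoc del: fps_const_mult)
  let ?C = "U (Tser t x y) * V (Tser t z w) - V (Tser t z w) * U (Tser t x y)"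
  let ?R = "U (Tser t z y) * V (Tser t x w) - V (Tser t z y) * U (Tser t x w)"
  have O: "smap2 sc (Ec \<beta> 0) * ?C = smap2 sc (fps_X * Y2) * ?R"
    using OYF[OF sc OY xyzw] unfolding XY .
  then have "\<Delta> (smap2 sc (Ec \<beta> 0) * ?C) = \<Delta> (smap2 sc (fps_X * Y2) * ?R)" by simp
  then have "smap sc (G1 * G2) * \<Delta> ?C = smap sc (G1 * G2) * \<Delta> ?R"
    unfolding Dm Ds Delta_Ec[OF G10 G20] Delta_XY[OF G10 G20] CI2[OF K1 K2] .
  then have "smap sc G1 * (smap sc G2 * (\<Delta> ?C - \<Delta> ?R)) = 0"
    by (simp add: smap_mult[OF sc] mult.assoc right_diff_distrib)
  then have "smap sc G2 * (\<Delta> ?C - \<Delta> ?R) = 0" by (rule canG[OF sc G10 G11])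
  then have "\<Delta> ?C - \<Delta> ?R = 0" by (rule canG[OF sc G20 G21])
  then show ?thesis unfolding Dd Dm DU DV by simp
qed


lemma prodR_congF: "(\<And>i. lo \<le> i \<Longrightarrow> i \<le> hi \<Longrightarrow> F i (r i) (d i) = F' i (r i) (d i)) \<Longrightarrow> prodR F lo hi r d = prodR F' lo hi r d"
  unfolding prodR_def by (intro arg_cong[where f=prod_list] map_cong) auto

lemma minorP_congF:
  assumes "\<And>j x. 1 \<le> j \<Longrightarrow> j \<le> m \<Longrightarrow> x \<in> c ` {1..m} \<Longrightarrow> F j x (d j) = F' j x (d j)"
  shows "minorP F m c d = minorP F' m c d"
  unfolding minorP_def
proof (intro sum.cong refl arg_cong2[where f="(*)"] prodR_congF)
  fix \<sigma> i assume s: "\<sigma> \<in> {\<sigma>. \<sigma> permutes {1..m}}" and i: "1 \<le> i" "i \<le> m"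
  have "\<sigma> i \<in> {1..m}" using perm_in[OF s, of i] i by auto
  then show "F i ((c \<circ> \<sigma>) i) (d i) = F' i ((c \<circ> \<sigma>) i) (d i)" using assms i by auto
qed

lemma V_prod_list: "V (prod_list (map g xs)) = prod_list (map (\<lambda>x. V (g x)) xs)"
  by (induction xs) (simp_all del: fps_const_mult add: fps_const_mult[symmetric])

lemma minorP_V: "minorP (\<lambda>j x y. V (f j x y)) m c d = V (minorP f m c d)"
proof -
  have "V (minorP f m c d) = (\<Sum>\<sigma>\<in>{\<sigma>. \<sigma> permutes {1..m}}. V (of_int (sign \<sigma>) * prodR f 1 m (c \<circ> \<sigma>) d))"
    by (simp only: minorP_def fps_const_sum)
  also have "\<dots> = minorP (\<lambda>j x y. V (f j x y)) m c d"
    unfolding minorP_def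
  proof (rule sum.cong[OF refl])
    fix \<sigma>
    have "V (prodR f 1 m (c \<circ> \<sigma>) d) = prodR (\<lambda>j x y. V (f j x y)) 1 m (c \<circ> \<sigma>) d"
      unfolding prodR_def by (rule V_prod_list)
    then show "V (of_int (sign \<sigma>) * prodR f 1 m (c \<circ> \<sigma>) d) = of_int (sign \<sigma>) * prodR (\<lambda>j x y. V (f j x y)) 1 m (c \<circ> \<sigma>) d"
      by (simp only: fps_const_mult[symmetric] fps_of_int)
  qed
  finally show ?thesis by simp
qed

lemma QM:
  assumes c: "\<forall>i\<in>{1..m}. c i \<in> {1..n}"
  shows "qminor sc \<beta> n t m c d = minorP (Tfac sc \<beta> t) m c d"
proof -
  let ?P = "{p. p permutes {1..m}}"
  let ?A = "PiE {1..m} (\<lambda>_. {1..n})"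
  let ?g = "\<lambda>a p. of_int (sign p) * prodR (Tfac sc \<beta> t) 1 m a d"
  have fin: "finite ?A" "finite ?P" by (auto intro: finite_PiE finite_permutations)
  have pl: "prod_list (map (\<lambda>i. Tfac sc \<beta> t i (a i) (d i)) [1..<m+1]) = prodR (Tfac sc \<beta> t) 1 m a d" for a
    by (simp add: prodR_def)
  have sets: "{p. p permutes {1..m} \<and> (\<forall>i\<in>{1..m}. c i = a (p i))} = {p \<in> ?P. \<forall>i\<in>{1..m}. c i = a (p i)}" for a
    by auto
  have "qminor sc \<beta> n t m c d = (\<Sum>a\<in>?A. \<Sum>p\<in>{p \<in> ?P. \<forall>i\<in>{1..m}. c i = a (p i)}. ?g a p)"
    by (simp only: qminor_def antisym_entry_def pl sets of_int_sum fps_const_sum fps_of_int sum_distrib_right)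
  also have "\<dots> = (\<Sum>p\<in>?P. \<Sum>a\<in>{a \<in> ?A. \<forall>i\<in>{1..m}. c i = a (p i)}. ?g a p)"
    by (rule sum.swap_restrict[OF fin])
  also have "\<dots> = (\<Sum>p\<in>?P. of_int (sign (inv p)) * prodR (Tfac sc \<beta> t) 1 m (c \<circ> inv p) d)"
  proof (rule sum.cong[OF refl])
    fix p assume p: "p \<in> ?P"
    then have pp: "p permutes {1..m}" by simp
    have eq: "{a \<in> ?A. \<forall>i\<in>{1..m}. c i = a (p i)} = {restrict (c \<circ> inv p) {1..m}}"
    proof (intro equalityI subsetI)
      fix a assume a: "a \<in> {a \<in> ?A. \<forall>i\<in>{1..m}. c i = a (p i)}"
      have "a j = restrict (c \<circ> inv p) {1..m} j" for j
      proof (cases "j \<in> {1..m}")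
        case True
        then have "inv p j \<in> {1..m}" using permutes_in_image[OF permutes_inv[OF pp]] by simp
        then have "c (inv p j) = a (p (inv p j))" using a by auto
        then show ?thesis using True permutes_inverses(1)[OF pp] by simp
      next
        case False then show ?thesis using a by (auto simp: PiE_def extensional_def)
      qed
      then show "a \<in> {restrict (c \<circ> inv p) {1..m}}" by auto
    next
      fix a assume "a \<in> {restrict (c \<circ> inv p) {1..m}}"
      then have a: "a = restrict (c \<circ> inv p) {1..m}" by simp
      have "a \<in> ?A"
        unfolding a using c permutes_in_image[OF permutes_inv[OF pp]] by (auto simp: PiE_def)
      moreover have "\<forall>i\<in>{1..m}. c i = a (p i)"
        unfolding a using permutes_in_image[OF pp] permutes_inverses(2)[OF pp] by auto
      ultimately show "a \<in> {a \<in> ?A. \<forall>i\<in>{1..m}. c i = a (p i)}" by simp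
    qed
    have pr: "prodR (Tfac sc \<beta> t) 1 m (restrict (c \<circ> inv p) {1..m}) d = prodR (Tfac sc \<beta> t) 1 m (c \<circ> inv p) d"
      by (rule prodR_cong) auto
    have "permutation p" by (rule permutes_imp_permutation[OF _ pp]) simp
    then have "sign (inv p) = sign p" by (rule sign_inverse)
    then show "(\<Sum>a\<in>{a \<in> ?A. \<forall>i\<in>{1..m}. c i = a (p i)}. ?g a p) = of_int (sign (inv p)) * prodR (Tfac sc \<beta> t) 1 m (c \<circ> inv p) d"
      unfolding eq using pr by simp
  qed
  also have "\<dots> = minorP (Tfac sc \<beta> t) m c d"
    unfolding minorP_def by (rule sum_permutations_inverse[symmetric])
  finally show ?thesis .
qed


lemma ca_of_nat: "complex_alg sc \<Longrightarrow> sc (of_nat k) = of_nat k"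
  by (induction k) (simp_all add: ca_zero ca_add ca_one)

lemma Cst_neg_of_nat: "Cst (- of_nat k :: 'b::ring_1) = - of_nat k"
proof -
  have "(of_nat k :: 'b fps fps) = Cst (of_nat k)" by (simp add: fps_of_nat)
  then show ?thesis by simp
qed

lemma rearr: "a * (A - B) = d * (C - D) \<Longrightarrow> a * A - d * C = a * B - d * (D :: 'b::ring_1)"
  by (simp add: right_diff_distrib algebra_simps)

lemma Ec_shift: "Ec \<beta> c = Ec \<beta> 0 - Cst c * (fps_X * Y2)"
  unfolding Ec_def by (simp add: algebra_simps)

theorem mainTheorem9:
  fixes sc :: "complex \<Rightarrow> 'a::ring_1" and \<beta> :: complex and n m k l :: nat
    and t :: "nat \<Rightarrow> nat \<Rightarrow> nat \<Rightarrow> 'a" and a b :: "nat \<Rightarrow> nat"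
  assumes "complex_alg sc" and "OY_rel sc \<beta> n t"
    and "n \<ge> 1" and "\<beta> \<noteq> 0" and "1 \<le> m" and "m \<le> n"
    and "\<forall>i\<in>{1..m}. a i \<in> {1..n}" and "\<forall>i\<in>{1..m}. b i \<in> {1..n}"
    and "k \<in> {1..n}" and "l \<in> {1..n}"
  shows "\<forall>r s :: int.
     factor_coeff sc \<beta> (\<lambda>p q. commutator (Tc t p k l) (fps_nth (qminor sc \<beta> n t m a b) q)) r s
     = zext (\<lambda>p q. (\<Sum>i=1..m. Tc t p (a i) l * fps_nth (qminor sc \<beta> n t m (a(i := k)) b) q)
                  - (\<Sum>i=1..m. fps_nth (qminor sc \<beta> n t m a (b(i := l))) q * Tc t p k (b i))) r s"
proof -
  note sc = assms(1) and OY = assms(2) and b0 = assms(4) and m1 = assms(5)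
  note aR = assms(7) and bR = assms(8) and kR = assms(9) and lR = assms(10)
  define Gs where "Gs = (\<lambda>j::nat. if j = 1 then fps_X else phi_inv \<beta> (- of_nat (j - 1)))"
  have KG: "Kq \<beta> (- of_nat (j - 1)) (Gs j)" if "1 \<le> j" for j
  proof (cases "j = 1")
    case True then show ?thesis using Kq_X[of \<beta>] by (simp add: Gs_def)
  next
    case False then show ?thesis using phi_inv_K[OF b0] by (simp add: Gs_def)
  qed
  define F where "F = (\<lambda>j x y. Ev sc (Gs j) (Tser t x y))"
  have TF: "Tfac sc \<beta> t j x y = F j x y" if "1 \<le> j" for j x y
  proof (cases "j = 1")
    case True then show ?thesis by (simp add: Tfac_def F_def Gs_def Ev_X_id[OF sc])
  next
    case False then show ?thesis
      by (simp add: Tfac_def F_def Gs_def Tphi_def Ev_def Tser_nth)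
  qed
  define e :: "'a fps fps" where "e = smap2 sc (Ec \<beta> 0)"
  define \<delta> :: "'a fps fps" where "\<delta> = fps_X * Y2"
  have \<delta>s: "\<delta> = smap2 sc (fps_X * Y2)"
    by (simp add: \<delta>_def smap2_mult[OF sc] smap2_X[OF sc] smap2_Y[OF sc] del: fps_const_mult)
  have mcI: "mc e \<delta>" unfolding mc_def e_def \<delta>s by (simp add: smap2_cent[OF sc])
  have EEq: "mc.EE e \<delta> j = smap2 sc (Ec \<beta> (- of_nat (j - 1)))" for j
  proof -
    have "smap2 sc (Ec \<beta> (- of_nat (j - 1))) = e - Cst (sc (- of_nat (j - 1))) * \<delta>"
      unfolding e_def \<delta>s Ec_shift[of \<beta> "- of_nat (j - 1)"]
      by (simp add: smap2_diff[OF sc] smap2_mult[OF sc] smap2_Cst[OF sc] del: fps_const_mult fps_const_neg)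
    also have "\<dots> = e + of_nat (j - 1) * \<delta>"
      by (simp add: ca_uminus[OF sc] ca_of_nat[OF sc] Cst_neg_of_nat del: fps_const_neg)
    finally show ?thesis by (simp add: mc.EE_def[OF mcI])
  qed
  define Tt where "Tt = (\<lambda>k l. if k \<in> {1..n} \<and> l \<in> {1..n} then U (Tser t k l) else (0 :: 'a fps fps))"
  define Ft where "Ft = (\<lambda>j x y. if x \<in> {1..n} \<and> y \<in> {1..n} then V (F j x y) else (0 :: 'a fps fps))"
  have Rel: "mc.EE e \<delta> j * (Tt k' l' * Ft j x y) - \<delta> * (Tt x l' * Ft j k' y) = mc.EE e \<delta> j * (Ft j x y * Tt k' l') - \<delta> * (Ft j x l' * Tt k' y)"
    if j: "1 \<le> j" "j \<le> m" for j k' l' x y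
  proof (cases "k' \<in> {1..n} \<and> l' \<in> {1..n} \<and> x \<in> {1..n} \<and> y \<in> {1..n}")
    case True
    then have r: "k' \<in> {1..n}" "l' \<in> {1..n}" "x \<in> {1..n}" "y \<in> {1..n}" by auto
    have "smap2 sc (Ec \<beta> (- of_nat (j - 1))) * (U (Tser t k' l') * V (F j x y) - V (F j x y) * U (Tser t k' l'))
        = fps_X * (Y2 * (U (Tser t x l') * V (F j k' y) - V (F j x l') * U (Tser t k' y)))"
      unfolding F_def by (rule RelS[OF sc OY KG[OF j(1)] r])
    then have "mc.EE e \<delta> j * (U (Tser t k' l') * V (F j x y) - V (F j x y) * U (Tser t k' l'))
        = \<delta> * (U (Tser t x l') * V (F j k' y) - V (F j x l') * U (Tser t k' y))"
    proof -
      have dW: "fps_X * (Y2 * W) = \<delta> * W" for W :: "'a fps fps" by (simp add: \<delta>_def mult.assoc)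
      show ?thesis using \<open>smap2 sc (Ec \<beta> (- of_nat (j - 1))) * _ = _\<close> unfolding EEq[symmetric] dW .
    qed
    then show ?thesis using r unfolding Tt_def Ft_def by (simp add: rearr)
  next
    case False then show ?thesis by (auto simp: Tt_def Ft_def)
  qed
  have two: "x + x = 0 \<Longrightarrow> x = 0" for x :: "'a fps fps"
  proof -
    assume h: "x + x = 0"
    have "Cst (sc (1/2)) * (x + x) = Cst (sc (1/2) + sc (1/2)) * x"
      by (simp add: distrib_left distrib_right del: fps_const_add add: fps_const_add[symmetric])
    also have "sc (1/2) + sc (1/2) = sc 1" using ca_add[OF sc, of "1/2" "1/2"] by simp
    finally have "Cst (sc (1/2)) * (x + x) = x" by (simp add: ca_one[OF sc])
    then show "x = 0" using h by simp
  qed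
  have Dg: "Ft j x y * Ft (Suc j) z w - Ft (Suc j) z w * Ft j x y = Ft j z y * Ft (Suc j) x w - Ft (Suc j) z y * Ft j x w"
    if j: "1 \<le> j" "j < m" for j x y z w
  proof (cases "x \<in> {1..n} \<and> y \<in> {1..n} \<and> z \<in> {1..n} \<and> w \<in> {1..n}")
    case True
    then have r: "x \<in> {1..n}" "y \<in> {1..n}" "z \<in> {1..n}" "w \<in> {1..n}" by auto
    have K2: "Kq \<beta> (- of_nat (j - 1) - 1) (Gs (Suc j))"
    proof -
      have "(- of_nat (j - 1) - 1 :: complex) = - of_nat (Suc j - 1)"
        using j(1) by (cases j) (simp_all add: algebra_simps)
      then show ?thesis using KG[of "Suc j"] by simp
    qed
    have "F j x y * F (Suc j) z w - F (Suc j) z w * F j x y = F j z y * F (Suc j) x w - F (Suc j) z y * F j x w"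
      unfolding F_def by (rule RelD[OF sc OY KG[OF j(1)] K2 r])
    then have "V (F j x y * F (Suc j) z w - F (Suc j) z w * F j x y) = V (F j z y * F (Suc j) x w - F (Suc j) z y * F j x w)"
      by simp
    then show ?thesis using r unfolding Ft_def by (simp del: fps_const_mult fps_const_sub add: fps_const_mult[symmetric] fps_const_sub[symmetric])
  next
    case False then show ?thesis by (auto simp: Ft_def)
  qed
  have anti: "minorP Ft m a' (b' \<circ> tau i i') = - minorP Ft m a' b'" if "1 \<le> i" "i < i'" "i' \<le> m" for a' b' i i'
    using minor_anti[of m Ft, OF Dg two] that by blast
  have canc: "x = 0" if "2 \<le> i" "i \<le> m" "mc.EE e \<delta> i * x = 0" for i x
    using that(3) unfolding EEq by (rule canE[OF sc])
  have MA: "e * (Tt k l * minorP Ft m a b - minorP Ft m a b * Tt k l) =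
    \<delta> * ((\<Sum>i=1..m. Tt (a i) l * minorP Ft m (a(i := k)) b) - (\<Sum>i=1..m. minorP Ft m a (b(i := l)) * Tt k (b i)))"
    by (rule mc.main_abstract[OF mcI Rel anti canc m1])
  have MQ: "minorP Ft m c d = V (qminor sc \<beta> n t m c d)" if c: "\<forall>i\<in>{1..m}. c i \<in> {1..n}" and d: "\<forall>i\<in>{1..m}. d i \<in> {1..n}" for c d
  proof -
    have "minorP Ft m c d = minorP (\<lambda>j x y. V (F j x y)) m c d"
      by (rule minorP_congF) (use c d in \<open>auto simp: Ft_def\<close>)
    also have "\<dots> = V (minorP F m c d)" by (rule minorP_V)
    also have "minorP F m c d = minorP (Tfac sc \<beta> t) m c d"
      by (rule minorP_congF) (simp add: TF)
    also have "\<dots> = qminor sc \<beta> n t m c d" by (rule QM[OF c, symmetric])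
    finally show ?thesis .
  qed
  define Q where "Q = qminor sc \<beta> n t m a b"
  define Qa where "Qa = (\<lambda>i. qminor sc \<beta> n t m (a(i := k)) b)"
  define Qb where "Qb = (\<lambda>i. qminor sc \<beta> n t m a (b(i := l)))"
  have e1: "Tt k l * minorP Ft m a b - minorP Ft m a b * Tt k l = mk2 (\<lambda>p q. commutator (Tc t p k l) (Q $ q))"
    using MQ[OF aR bR] kR lR by (intro fps_ext) (simp add: Tt_def Q_def commutator_def Tser_nth)
  have e2: "(\<Sum>i=1..m. Tt (a i) l * minorP Ft m (a(i := k)) b) - (\<Sum>i=1..m. minorP Ft m a (b(i := l)) * Tt k (b i))
      = mk2 (\<lambda>p q. (\<Sum>i=1..m. Tc t p (a i) l * Qa i $ q) - (\<Sum>i=1..m. Qb i $ q * Tc t p k (b i)))"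
  proof -
    have s1: "(\<Sum>i=1..m. Tt (a i) l * minorP Ft m (a(i := k)) b) = (\<Sum>i=1..m. U (Tser t (a i) l) * V (Qa i))"
    proof (rule sum.cong[OF refl])
      fix i assume i: "i \<in> {1..m}"
      have "\<forall>j\<in>{1..m}. (a(i := k)) j \<in> {1..n}" using aR kR by auto
      then show "Tt (a i) l * minorP Ft m (a(i := k)) b = U (Tser t (a i) l) * V (Qa i)"
        using MQ[OF _ bR] aR i lR by (simp add: Tt_def Qa_def)
    qed
    have s2: "(\<Sum>i=1..m. minorP Ft m a (b(i := l)) * Tt k (b i)) = (\<Sum>i=1..m. V (Qb i) * U (Tser t k (b i)))"
    proof (rule sum.cong[OF refl])
      fix i assume i: "i \<in> {1..m}"
      have "\<forall>j\<in>{1..m}. (b(i := l)) j \<in> {1..n}" using bR lR by auto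
      then show "minorP Ft m a (b(i := l)) * Tt k (b i) = V (Qb i) * U (Tser t k (b i))"
        using MQ[OF aR] bR i kR by (simp add: Tt_def Qb_def)
    qed
    show ?thesis unfolding s1 s2 by (intro fps_ext) (simp add: fps_sum_nth Tser_nth)
  qed
  have "smap2 sc (Ec \<beta> 0) * mk2 (\<lambda>p q. commutator (Tc t p k l) (Q $ q))
      = fps_X * (Y2 * mk2 (\<lambda>p q. (\<Sum>i=1..m. Tc t p (a i) l * Qa i $ q) - (\<Sum>i=1..m. Qb i $ q * Tc t p k (b i))))"
    using MA unfolding e1 e2 e_def \<delta>_def by (simp add: mult.assoc)
  then show ?thesis unfolding TL[OF sc, symmetric] Q_def Qa_def Qb_def .
qed


end
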